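(* Let $n,m$ be even integers with $0\le m\le n$, let $w_H(x)=e^{-x^2}$ on $\mathbb{R}$ and let $\{h_l\}_{l\ge0}$ be the orthonormal Hermite polynomials in $L^2(\mathbb{R},w_H)$ (positive leading coefficients). Let $\lambda_{\frac n2+1}$ be the smallest zero of the orthonormal Laguerre polynomial $p^{(-1/2)}_{\frac n2+1}(x)$ and $\lambda^{m/2}_{\frac{n-m}2+1}$ the smallest zero of the associated Laguerre polynomial $p^{(-1/2)}_{\frac{n-m}2+1}(x,\frac m2)$. Then: (1) The minimizers of $\operatorname{var}_S$ over $\mathbb{S}_n$ are exactly $\mathcal{H}_n(x)=\kappa_1\sum_{l=0}^{n/2}p^{(-1/2)}_l(\lambda_{\frac n2+1})\,h_{2l}(x)$ with $\kappa_1\in\mathbb{C}$ chosen so that $\|\mathcal{H}_n\|=1$ (unique up to a unimodular scalar), and $\min_{P\in\mathbb{S}_n}\operatorname{var}_S(P)=\lambda_{\frac n2+1}$. (2) The minimizers of $\operatorname{var}_S$ over $\mathbb{S}^m_n$ are exactly $\mathcal{H}^m_n(x)=\kappa_2\sum_{l=m/2}^{n/2}p^{(-1/2)}_{l-\frac m2}(\lambda^{m/2}_{\frac{n-m}2+1},\tfrac m2)\,h_{2l}(x)$ with $\kappa_2\in\mathbb{C}$ chosen so that $\|\mathcal{H}^m_n\|=1$ (unique up to a unimodular scalar), and $\min_{P\in\mathbb{S}^m_n}\operatorname{var}_S(P)=\lambda^{m/2}_{\frac{n-m}2+1}$.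
   Context: Norm: $\|f\|^2=\int_{\mathbb{R}}|f|^2e^{-x^2}dx$. $\operatorname{var}_S(f)=\int_{\mathbb{R}}x^2|f(x)|^2e^{-x^2}dx$. $\Pi_n=\{\sum_{l=0}^nc_lh_l\}$, $\Pi^m_n=\{\sum_{l=m}^nc_lh_l\}$ ($c_l\in\mathbb{C}$), and $\mathbb{S}_n,\mathbb{S}^m_n$ are their norm-one elements. For $\alpha>-1$, $p^{(\alpha)}_l$ are the orthonormal Laguerre polynomials in $L^2([0,\infty),x^\alpha e^{-x})$ with positive leading coefficient; they satisfy $b_{l+1}p^{(\alpha)}_{l+1}(x)=(x-a_l)p^{(\alpha)}_l(x)-b_lp^{(\alpha)}_{l-1}(x)$ with $a_l=2l+\alpha+1$, $b_l=\sqrt{l(l+\alpha)}$ for $l\ge1$. The associated Laguerre polynomials are defined by $p^{(\alpha)}_{-1}(x,M)=0$, $p^{(\alpha)}_0(x,M)=1$, $b_{M+l+1}p^{(\alpha)}_{l+1}(x,M)=(x-a_{M+l})p^{(\alpha)}_l(x,M)-b_{M+l}p^{(\alpha)}_{l-1}(x,M)$, $l\ge0$. *)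

theory Defs
  imports "HOL-Analysis.Analysis"
begin

text \<open>Physicists' Hermite polynomials H_l (leading coefficient 2^l), orthogonal for e^{-x^2}
  with squared norm sqrt(pi) 2^l l!.\<close>
fun hermite_H :: "nat \<Rightarrow> real \<Rightarrow> real" where
  "hermite_H 0 x = 1"
| "hermite_H (Suc 0) x = 2 * x"
| "hermite_H (Suc (Suc l)) x = 2 * x * hermite_H (Suc l) x - 2 * real (Suc l) * hermite_H l x"

definition herm_h :: "nat \<Rightarrow> real \<Rightarrow> real" where
  "herm_h l x = hermite_H l x / sqrt (sqrt pi * 2 ^ l * fact l)"

definition wnorm :: "(real \<Rightarrow> complex) \<Rightarrow> real" where
  "wnorm f = sqrt (LINT x|lborel. (cmod (f x))\<^sup>2 * exp (- x\<^sup>2))"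

definition varS :: "(real \<Rightarrow> complex) \<Rightarrow> real" where
  "varS f = (LINT x|lborel. x\<^sup>2 * (cmod (f x))\<^sup>2 * exp (- x\<^sup>2))"

definition PiH :: "nat \<Rightarrow> (real \<Rightarrow> complex) set" where
  "PiH n = {P. \<exists>c :: nat \<Rightarrow> complex. P = (\<lambda>x. \<Sum>l\<le>n. c l * complex_of_real (herm_h l x))}"

definition PiH_from :: "nat \<Rightarrow> nat \<Rightarrow> (real \<Rightarrow> complex) set" where
  "PiH_from m n = {P. \<exists>c :: nat \<Rightarrow> complex. P = (\<lambda>x. \<Sum>l=m..n. c l * complex_of_real (herm_h l x))}"

definition SH :: "nat \<Rightarrow> (real \<Rightarrow> complex) set" where
  "SH n = {P \<in> PiH n. wnorm P = 1}"

definition SH_from :: "nat \<Rightarrow> nat \<Rightarrow> (real \<Rightarrow> complex) set" where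
  "SH_from m n = {P \<in> PiH_from m n. wnorm P = 1}"

definition lag_a :: "real \<Rightarrow> nat \<Rightarrow> real" where
  "lag_a \<alpha> l = 2 * real l + \<alpha> + 1"

definition lag_b :: "real \<Rightarrow> nat \<Rightarrow> real" where
  "lag_b \<alpha> l = sqrt (real l * (real l + \<alpha>))"

text \<open>Orthonormal Laguerre polynomials p^{(alpha)}_l in L^2([0,inf), x^alpha e^{-x}) with positive
  leading coefficient, via the three-term recurrence (p_{-1} = 0, p_0 = Gamma(alpha+1)^{-1/2}).\<close>
fun lag_p :: "real \<Rightarrow> nat \<Rightarrow> real \<Rightarrow> real" where
  "lag_p \<alpha> 0 x = 1 / sqrt (Gamma (\<alpha> + 1))"
| "lag_p \<alpha> (Suc 0) x = (x - lag_a \<alpha> 0) * lag_p \<alpha> 0 x / lag_b \<alpha> 1"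
| "lag_p \<alpha> (Suc (Suc l)) x =
     ((x - lag_a \<alpha> (Suc l)) * lag_p \<alpha> (Suc l) x - lag_b \<alpha> (Suc l) * lag_p \<alpha> l x)
       / lag_b \<alpha> (Suc (Suc l))"

fun lag_assoc :: "real \<Rightarrow> nat \<Rightarrow> nat \<Rightarrow> real \<Rightarrow> real" where
  "lag_assoc \<alpha> M 0 x = 1"
| "lag_assoc \<alpha> M (Suc 0) x = (x - lag_a \<alpha> M) / lag_b \<alpha> (M + 1)"
| "lag_assoc \<alpha> M (Suc (Suc l)) x =
     ((x - lag_a \<alpha> (M + Suc l)) * lag_assoc \<alpha> M (Suc l) x
        - lag_b \<alpha> (M + Suc l) * lag_assoc \<alpha> M l x) / lag_b \<alpha> (M + Suc l + 1)"

definition smallest_zero :: "(real \<Rightarrow> real) \<Rightarrow> real" where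
  "smallest_zero f = Min {x. f x = 0}"

definition lam_n :: "nat \<Rightarrow> real" where
  "lam_n n = smallest_zero (lag_p (-1/2) (n div 2 + 1))"

definition lam_mn :: "nat \<Rightarrow> nat \<Rightarrow> real" where
  "lam_mn m n = smallest_zero (lag_assoc (-1/2) (m div 2) ((n - m) div 2 + 1))"

definition Hcal :: "nat \<Rightarrow> real \<Rightarrow> complex" where
  "Hcal n x = complex_of_real (\<Sum>l\<le>n div 2. lag_p (-1/2) l (lam_n n) * herm_h (2 * l) x)"

definition Hcal_from :: "nat \<Rightarrow> nat \<Rightarrow> real \<Rightarrow> complex" where
  "Hcal_from m n x = complex_of_real
     (\<Sum>l=m div 2..n div 2. lag_assoc (-1/2) (m div 2) (l - m div 2) (lam_mn m n) * herm_h (2 * l) x)"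

end

theory Submission
  imports Defs "HOL-Probability.Distributions" "HOL-Real_Asymp.Real_Asymp" "HOL-Computational_Algebra.Polynomial"
begin

fun Hp :: "nat \<Rightarrow> real poly" where
  "Hp 0 = 1"
| "Hp (Suc 0) = [:0, 2:]"
| "Hp (Suc (Suc l)) = [:0, 2:] * Hp (Suc l) - smult (2 * real (Suc l)) (Hp l)"

lemma poly_Hp: "poly (Hp l) x = hermite_H l x"
  by (induction l rule: Hp.induct) (auto simp: algebra_simps)

lemma Hp_Suc: "Hp (Suc l) = [:0, 2:] * Hp l - smult (2 * real l) (Hp (l - 1))"
  by (cases l) auto

lemma pderiv_Hp: "pderiv (Hp l) = smult (2 * real l) (Hp (l - 1))"
proof (induction l rule: Hp.induct)
  case 1 then show ?case by simp
next
  case 2 then show ?case by (simp add: pderiv_pCons)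
next
  case (3 l)
  have e: "Hp (Suc l) = [:0, 2:] * Hp l - smult (2 * real l) (Hp (l - 1))" by (rule Hp_Suc)
  have "pderiv (Hp (Suc (Suc l))) = smult 2 (Hp (Suc l)) + [:0, 2:] * smult (2 * real (Suc l)) (Hp l)
          - smult (2 * real (Suc l)) (smult (2 * real l) (Hp (l - 1)))"
    using 3 by (simp add: pderiv_mult pderiv_diff pderiv_smult pderiv_pCons)
  also have "\<dots> = smult 2 (Hp (Suc l)) + smult (2 * real (Suc l)) (Hp (Suc l))"
    by (subst (2) e) (simp add: algebra_simps smult_diff_right)
  also have "\<dots> = smult (2 * real (Suc (Suc l))) (Hp (Suc (Suc l) - 1))"
    by (simp add: algebra_simps smult_add_left[symmetric])
  finally show ?case .
qed

lemma integrable_xk: "integrable lborel (\<lambda>x::real. x ^ k * exp (- x\<^sup>2))"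
proof -
  have "integrable lborel (\<lambda>x. normal_density 0 (sqrt (1/2)) x * (x - 0) ^ k)"
    by (rule integrable_normal_moment) simp
  then have "integrable lborel (\<lambda>x. sqrt pi * (normal_density 0 (sqrt (1/2)) x * (x - 0) ^ k))"
    by (rule integrable_mult_right)
  moreover have "(\<lambda>x. sqrt pi * (normal_density 0 (sqrt (1/2)) x * (x - 0) ^ k)) = (\<lambda>x. x ^ k * exp (- x\<^sup>2))"
    by (rule ext) (simp add: normal_density_def real_sqrt_mult)
  ultimately show ?thesis by metis
qed

lemma integral_exp: "(LINT x|lborel. exp (- (x::real)\<^sup>2)) = sqrt pi"
proof -
  have eq: "(\<lambda>x. normal_density 0 (sqrt (1/2)) x) = (\<lambda>x::real. exp (- x\<^sup>2) / sqrt pi)"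
    by (rule ext) (simp add: normal_density_def real_sqrt_mult)
  have "(LINT x|lborel. exp (- (x::real)\<^sup>2) / sqrt pi) = 1"
    using integral_normal_density[of "sqrt (1/2)" 0] by (simp only: eq real_sqrt_gt_zero)
  then have "(LINT x|lborel. exp (- (x::real)\<^sup>2)) / sqrt pi = 1"
    by (simp only: integral_divide_zero)
  moreover have "sqrt pi > 0" by simp
  ultimately show ?thesis by (auto simp: divide_eq_eq)
qed

lemma integrable_poly_exp: fixes p :: "real poly" shows "integrable lborel (\<lambda>x. poly p x * exp (- x\<^sup>2))"
proof -
  have "integrable lborel (\<lambda>x. \<Sum>i\<le>degree p. coeff p i * (x ^ i * exp (- x\<^sup>2)))"
    by (simp add: integrable_xk)
  moreover have "\<And>x. (\<Sum>i\<le>degree p. coeff p i * (x ^ i * exp (- x\<^sup>2))) = poly p x * exp (- x\<^sup>2)"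
    by (simp add: poly_altdef sum_distrib_right mult.assoc)
  ultimately show ?thesis by simp
qed

lemma poly_exp_tendsto:
  fixes p :: "real poly"
  shows "((\<lambda>x. poly p x * exp (- x\<^sup>2)) \<longlongrightarrow> 0) at_top"
    and "((\<lambda>x. poly p x * exp (- x\<^sup>2)) \<longlongrightarrow> 0) at_bot"
proof -
  have eq: "(\<lambda>x. poly p x * exp (- x\<^sup>2)) = (\<lambda>x. \<Sum>i\<le>degree p. coeff p i * (x ^ i * exp (- x\<^sup>2)))"
    by (simp add: poly_altdef sum_distrib_right mult.assoc)
  have t: "\<And>i. ((\<lambda>x::real. x ^ i * exp (- x\<^sup>2)) \<longlongrightarrow> 0) at_top" by real_asymp
  have b: "\<And>i. ((\<lambda>x::real. x ^ i * exp (- x\<^sup>2)) \<longlongrightarrow> 0) at_bot" by real_asymp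
  show "((\<lambda>x. poly p x * exp (- x\<^sup>2)) \<longlongrightarrow> 0) at_top"
    unfolding eq by (intro tendsto_null_sum tendsto_mult_right_zero t)
  show "((\<lambda>x. poly p x * exp (- x\<^sup>2)) \<longlongrightarrow> 0) at_bot"
    unfolding eq by (intro tendsto_null_sum tendsto_mult_right_zero b)
qed

lemma FTC_poly: fixes p :: "real poly" shows "(LINT x|lborel. poly (pderiv p - [:0, 2:] * p) x * exp (- x\<^sup>2)) = 0"
proof -
  let ?f = "\<lambda>x. poly (pderiv p - [:0, 2:] * p) x * exp (- x\<^sup>2)"
  let ?F = "\<lambda>x. poly p x * exp (- x\<^sup>2)"
  have "interval_lebesgue_integral lborel (-\<infinity>) \<infinity> ?f = 0 - 0"
  proof (rule interval_integral_FTC_integrable)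
    fix x :: real
    have "(?F has_real_derivative ?f x) (at x)"
      by (auto intro!: derivative_eq_intros poly_DERIV simp: algebra_simps)
    then show "(?F has_vector_derivative ?f x) (at x)"
      by (simp add: has_real_derivative_iff_has_vector_derivative)
    show "isCont ?f x" by (intro continuous_intros)
  next
    show "set_integrable lborel (einterval (-\<infinity>) \<infinity>) ?f"
      using integrable_poly_exp[of "pderiv p - [:0, 2:] * p"] by (simp add: set_integrable_def)
    show "((?F \<circ> real_of_ereal) \<longlongrightarrow> 0) (at_right (-\<infinity>))"
      unfolding ereal_tendsto_simps1 by (rule poly_exp_tendsto)
    show "((?F \<circ> real_of_ereal) \<longlongrightarrow> 0) (at_left \<infinity>)"
      unfolding ereal_tendsto_simps1 by (rule poly_exp_tendsto)
  qed simp
  then show ?thesis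
    by (simp add: interval_lebesgue_integral_def set_lebesgue_integral_def)
qed

definition Lf :: "real poly \<Rightarrow> real" where
  "Lf p = (LINT x|lborel. poly p x * exp (- x\<^sup>2))"

lemma Lf_add: "Lf (p + q) = Lf p + Lf q"
  unfolding Lf_def by (simp add: distrib_right integrable_poly_exp)

lemma Lf_diff: "Lf (p - q) = Lf p - Lf q"
  unfolding Lf_def by (simp add: left_diff_distrib integrable_poly_exp)

lemma Lf_smult: "Lf (smult c p) = c * Lf p"
  unfolding Lf_def by (simp add: mult.assoc)

lemma Lf_rec: "Lf (Hp (Suc k) * Hp l) = 2 * real l * Lf (Hp k * Hp (l - 1))"
proof -
  have "pderiv (Hp k * Hp l) - [:0, 2:] * (Hp k * Hp l)
        = smult (2 * real l) (Hp k * Hp (l - 1)) - Hp (Suc k) * Hp l"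
    by (simp add: pderiv_mult pderiv_Hp Hp_Suc[of k] algebra_simps)
  then have "0 = Lf (smult (2 * real l) (Hp k * Hp (l - 1)) - Hp (Suc k) * Hp l)"
    using FTC_poly[of "Hp k * Hp l"] unfolding Lf_def by simp
  then show ?thesis by (simp add: Lf_diff Lf_smult)
qed

lemma Lf_Hp: "Lf (Hp k * Hp l) = (if k = l then sqrt pi * 2 ^ k * fact k else 0)"
proof (induction k arbitrary: l)
  case 0
  show ?case
  proof (cases l)
    case 0 then show ?thesis by (simp add: Lf_def integral_exp)
  next
    case (Suc l')
    have "Lf (Hp 0 * Hp l) = Lf (Hp (Suc l') * Hp 0)" by (simp add: Suc mult.commute)
    also have "\<dots> = 0" using Lf_rec[of l' 0] by simp
    finally show ?thesis using Suc by simp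
  qed
next
  case (Suc k)
  show ?case
  proof (cases l)
    case 0 then show ?thesis using Lf_rec[of k 0] by simp
  next
    case (Suc l')
    show ?thesis using Suc.IH[of l'] by (simp add: Lf_rec Suc)
  qed
qed

definition nu :: "nat \<Rightarrow> real" where "nu l = sqrt (sqrt pi * 2 ^ l * fact l)"

lemma nu_pos: "nu l > 0" by (simp add: nu_def)

lemma nu_sq: "(nu l)\<^sup>2 = sqrt pi * 2 ^ l * fact l" by (simp add: nu_def)

lemma herm_h_poly: "herm_h l x = poly (Hp l) x / nu l"
  by (simp add: herm_h_def poly_Hp nu_def)

lemma herm_prod_exp: "herm_h k x * herm_h l x * exp (- x\<^sup>2) = poly (Hp k * Hp l) x * exp (- x\<^sup>2) / (nu k * nu l)"
  by (simp add: herm_h_poly)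

lemma integrable_herm: "integrable lborel (\<lambda>x. herm_h k x * herm_h l x * exp (- x\<^sup>2))"
  unfolding herm_prod_exp by (rule integrable_divide_zero, rule integrable_poly_exp)

lemma ortho_herm: "(LINT x|lborel. herm_h k x * herm_h l x * exp (- x\<^sup>2)) = (if k = l then 1 else 0)"
proof -
  have "(LINT x|lborel. herm_h k x * herm_h l x * exp (- x\<^sup>2)) = Lf (Hp k * Hp l) / (nu k * nu l)"
    unfolding herm_prod_exp Lf_def by simp
  also have "\<dots> = (if k = l then 1 else 0)"
    using nu_pos[of k] nu_pos[of l] by (simp add: Lf_Hp nu_sq[symmetric] power2_eq_square)
  finally show ?thesis .
qed

lemma nu_Suc: "nu (Suc l) = sqrt (2 * real (Suc l)) * nu l"
  by (simp add: nu_def real_sqrt_mult[symmetric] algebra_simps)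

lemma hermite_Suc: "hermite_H (Suc l) x = 2 * x * hermite_H l x - 2 * real l * hermite_H (l - 1) x"
  using arg_cong[OF Hp_Suc[of l], of "\<lambda>p. poly p x"] by (simp add: poly_Hp)

lemma sqrt_half_mult: "sqrt (a / 2) * sqrt (2 * a) = (a::real)" if "a \<ge> 0"
proof -
  have "sqrt (a / 2) * sqrt (2 * a) = sqrt (a\<^sup>2)" by (simp add: real_sqrt_mult[symmetric] power2_eq_square)
  then show ?thesis using that by simp
qed

lemma sqrt_four: "sqrt 4 = (2::real)"
  by (rule real_sqrt_unique) auto

lemma sqrt_half: "sqrt (a / 2) = sqrt (2 * a) / (2::real)"
proof -
  have "sqrt (a / 2) * 2 = sqrt (a / 2) * sqrt 4" by (simp add: sqrt_four)
  also have "\<dots> = sqrt (a / 2 * 4)" by (simp only: real_sqrt_mult)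
  also have "\<dots> = sqrt (2 * a)" by simp
  finally show ?thesis by simp
qed

lemma x_herm: "x * herm_h l x = sqrt (real (Suc l) / 2) * herm_h (Suc l) x + sqrt (real l / 2) * herm_h (l - 1) x"
proof -
  have nl: "nu l > 0" by (rule nu_pos)
  have A: "sqrt (real (Suc l) / 2) * herm_h (Suc l) x = (x * hermite_H l x - real l * hermite_H (l - 1) x) / nu l"
  proof -
    have "sqrt (real (Suc l) / 2) * herm_h (Suc l) x
          = sqrt (real (Suc l) / 2) * (2 * x * hermite_H l x - 2 * real l * hermite_H (l - 1) x) / (sqrt (2 * real (Suc l)) * nu l)"
      by (simp add: herm_h_poly poly_Hp hermite_Suc nu_Suc)
    also have "\<dots> = (x * hermite_H l x - real l * hermite_H (l - 1) x) / nu l"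
    proof -
      have h: "sqrt (real (Suc l) / 2) = sqrt (2 * real (Suc l)) / 2"
        by (rule sqrt_half)
      have p: "sqrt (2 * real (Suc l)) > 0" by simp
      show ?thesis unfolding h using nl p by (simp add: field_simps del: of_nat_Suc)
    qed
    finally show ?thesis .
  qed
  have B: "sqrt (real l / 2) * herm_h (l - 1) x = real l * hermite_H (l - 1) x / nu l"
  proof (cases l)
    case 0 then show ?thesis by simp
  next
    case (Suc l')
    have n: "nu l = sqrt (2 * real l) * nu l'" using nu_Suc[of l'] Suc by simp
    have q: "sqrt (2 * real l) * sqrt (2 * real l) = 2 * real l" by simp
    have p: "sqrt (2 * real l) > 0" "nu l' > 0" using Suc nu_pos[of l'] by auto
    have "sqrt (real l / 2) * herm_h (l - 1) x = sqrt (2 * real l) / 2 * (hermite_H l' x / nu l')"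
      unfolding sqrt_half[of "real l"] using Suc by (simp add: herm_h_poly poly_Hp)
    also have "\<dots> = (sqrt (2 * real l) * sqrt (2 * real l)) * hermite_H l' x / (2 * (sqrt (2 * real l) * nu l'))"
      using p by (simp add: field_simps)
    also have "\<dots> = real l * hermite_H (l - 1) x / nu l"
      unfolding q n using Suc p by (simp add: field_simps)
    finally show ?thesis .
  qed
  show ?thesis unfolding A B using nl by (simp add: herm_h_poly poly_Hp field_simps)
qed

lemma cmod_sq_Re: "(cmod z)\<^sup>2 = Re (z * cnj z)"
  by (metis Re_complex_of_real complex_norm_square)

lemma parseval_integrand:
  "(cmod (\<Sum>l\<in>S. c l * complex_of_real (herm_h l x)))\<^sup>2 * exp (- x\<^sup>2)
     = (\<Sum>k\<in>S. \<Sum>l\<in>S. Re (c k * cnj (c l)) * (herm_h k x * herm_h l x * exp (- x\<^sup>2)))"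
proof -
  have "(cmod (\<Sum>l\<in>S. c l * complex_of_real (herm_h l x)))\<^sup>2
      = Re ((\<Sum>k\<in>S. c k * complex_of_real (herm_h k x)) * (\<Sum>l\<in>S. cnj (c l) * complex_of_real (herm_h l x)))"
    by (simp add: cmod_sq_Re cnj_sum)
  also have "\<dots> = (\<Sum>k\<in>S. \<Sum>l\<in>S. Re (c k * cnj (c l)) * (herm_h k x * herm_h l x))"
    by (simp add: sum_product Re_sum algebra_simps)
  finally show ?thesis by (simp add: sum_distrib_right mult.assoc)
qed

lemma parseval:
  assumes "finite S"
  shows "(LINT x|lborel. (cmod (\<Sum>l\<in>S. c l * complex_of_real (herm_h l x)))\<^sup>2 * exp (- x\<^sup>2))
           = (\<Sum>l\<in>S. (cmod (c l))\<^sup>2)"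
proof -
  have "(LINT x|lborel. (cmod (\<Sum>l\<in>S. c l * complex_of_real (herm_h l x)))\<^sup>2 * exp (- x\<^sup>2))
     = (LINT x|lborel. (\<Sum>k\<in>S. \<Sum>l\<in>S. Re (c k * cnj (c l)) * (herm_h k x * herm_h l x * exp (- x\<^sup>2))))"
    by (simp only: parseval_integrand)
  also have "\<dots> = (\<Sum>k\<in>S. \<Sum>l\<in>S. Re (c k * cnj (c l)) * (LINT x|lborel. herm_h k x * herm_h l x * exp (- x\<^sup>2)))"
    by (simp add: integrable_herm)
  also have "\<dots> = (\<Sum>k\<in>S. Re (c k * cnj (c k)))"
    using assms by (simp add: ortho_herm if_distrib cong: if_cong)
  also have "\<dots> = (\<Sum>l\<in>S. (cmod (c l))\<^sup>2)"
    by (simp add: cmod_sq_Re)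
  finally show ?thesis .
qed

lemma wnorm_sq:
  assumes "finite S"
  shows "(wnorm (\<lambda>x. \<Sum>l\<in>S. c l * complex_of_real (herm_h l x)))\<^sup>2 = (\<Sum>l\<in>S. (cmod (c l))\<^sup>2)"
  unfolding wnorm_def using assms by (simp add: parseval sum_nonneg)

definition dd :: "(nat \<Rightarrow> complex) \<Rightarrow> nat \<Rightarrow> complex" where
  "dd c j = complex_of_real (sqrt (real j / 2)) * c (j - 1) + complex_of_real (sqrt (real (Suc j) / 2)) * c (Suc j)"

lemma x_times_P:
  assumes "\<forall>l>L. c l = 0"
  shows "complex_of_real x * (\<Sum>l\<le>L. c l * complex_of_real (herm_h l x))
         = (\<Sum>j\<le>Suc L. dd c j * complex_of_real (herm_h j x))"
proof -
  define f where "f j = complex_of_real (sqrt (real j / 2)) * c (j - 1) * complex_of_real (herm_h j x)" for j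
  define g where "g l = c l * complex_of_real (sqrt (real l / 2)) * complex_of_real (herm_h (l - 1) x)" for l
  have "complex_of_real x * (\<Sum>l\<le>L. c l * complex_of_real (herm_h l x))
      = (\<Sum>l\<le>L. c l * complex_of_real (x * herm_h l x))"
    by (simp add: sum_distrib_left mult.left_commute)
  also have "\<dots> = (\<Sum>l\<le>L. f (Suc l)) + (\<Sum>l\<le>L. g l)"
    by (simp add: x_herm f_def g_def sum.distrib algebra_simps)
  also have "(\<Sum>l\<le>L. f (Suc l)) = (\<Sum>j\<le>Suc L. f j)"
    by (simp only: sum.atMost_Suc_shift) (simp add: f_def)
  also have "(\<Sum>l\<le>L. g l) = (\<Sum>l\<le>Suc (Suc L). g l)"
    using assms by (simp add: g_def)
  also have "\<dots> = (\<Sum>j\<le>Suc L. g (Suc j))"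
    by (simp only: sum.atMost_Suc_shift) (simp add: g_def)
  also have "(\<Sum>j\<le>Suc L. f j) + (\<Sum>j\<le>Suc L. g (Suc j)) = (\<Sum>j\<le>Suc L. dd c j * complex_of_real (herm_h j x))"
    by (simp add: f_def g_def dd_def sum.distrib[symmetric] algebra_simps)
  finally show ?thesis .
qed

lemma varS_formula:
  assumes "\<forall>l>L. c l = 0"
  shows "varS (\<lambda>x. \<Sum>l\<le>L. c l * complex_of_real (herm_h l x)) = (\<Sum>j\<le>Suc L. (cmod (dd c j))\<^sup>2)"
proof -
  have eq: "\<And>x. x\<^sup>2 * (cmod (\<Sum>l\<le>L. c l * complex_of_real (herm_h l x)))\<^sup>2 * exp (- x\<^sup>2)
      = (cmod (\<Sum>j\<le>Suc L. dd c j * complex_of_real (herm_h j x)))\<^sup>2 * exp (- x\<^sup>2)"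
    by (simp only: x_times_P[OF assms, symmetric] norm_mult norm_of_real power_mult_distrib power2_abs)
  have "varS (\<lambda>x. \<Sum>l\<le>L. c l * complex_of_real (herm_h l x))
     = (LINT x|lborel. (cmod (\<Sum>j\<le>Suc L. dd c j * complex_of_real (herm_h j x)))\<^sup>2 * exp (- x\<^sup>2))"
    unfolding varS_def by (simp only: eq)
  also have "\<dots> = (\<Sum>j\<le>Suc L. (cmod (dd c j))\<^sup>2)" by (rule parseval) simp
  finally show ?thesis .
qed


definition sk :: "nat \<Rightarrow> real" where "sk k = sqrt (real k + 1/2)"
definition tk :: "nat \<Rightarrow> real" where "tk k = sqrt (real k + 1)"

definition Eform :: "nat \<Rightarrow> (nat \<Rightarrow> complex) \<Rightarrow> real" where
  "Eform N u = (\<Sum>k\<le>N. (cmod (complex_of_real (sk k) * u k + complex_of_real (tk k) * u (Suc k)))\<^sup>2)"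

definition Oform :: "nat \<Rightarrow> (nat \<Rightarrow> complex) \<Rightarrow> real" where
  "Oform N v = (\<Sum>k\<le>N. (cmod (complex_of_real (sqrt (real k)) * v (k - 1) + complex_of_real (sk k) * v k))\<^sup>2)"

lemma sk_sq: "(sk k)\<^sup>2 = real k + 1/2" by (simp add: sk_def)
lemma tk_sq: "(tk k)\<^sup>2 = real k + 1" by (simp add: tk_def)
lemma sk_pos: "sk k > 0" by (simp add: sk_def)
lemma tk_pos: "tk k > 0" by (simp add: tk_def)

lemma term_id:
  "(cmod (complex_of_real a * y + complex_of_real b * y'))\<^sup>2
     = (a + b) * (a * (cmod y)\<^sup>2 + b * (cmod y')\<^sup>2) - a * b * (cmod (y - y'))\<^sup>2"
  unfolding cmod_power2 by (simp add: power2_eq_square algebra_simps)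

lemma gs_identity:
  fixes w :: "nat \<Rightarrow> real" and u y :: "nat \<Rightarrow> complex"
  assumes uy: "\<And>k. u k = complex_of_real (w k) * y k"
    and eig: "\<And>k. k \<le> N \<Longrightarrow> w k * ((2 * real k + 1/2) * w k + sk k * tk k * w (Suc k)
                      + sqrt (real k) * sk (k - 1) * w (k - 1)) = lam * (w k)\<^sup>2"
    and wN: "w (Suc N) = 0"
  shows "Eform N u = lam * (\<Sum>k\<le>N. (cmod (u k))\<^sup>2)
           - (\<Sum>k\<le>N. sk k * tk k * w k * w (Suc k) * (cmod (y k - y (Suc k)))\<^sup>2)"
proof -
  define a where "a k = sk k * w k" for k
  define b where "b k = tk k * w (Suc k)" for k
  define h where "h j = (sk (j - 1) * w (j - 1) + sqrt (real j) * w j) * (sqrt (real j) * w j) * (cmod (y j))\<^sup>2" for j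
  have "Eform N u = (\<Sum>k\<le>N. (a k + b k) * (a k * (cmod (y k))\<^sup>2 + b k * (cmod (y (Suc k)))\<^sup>2)
                      - a k * b k * (cmod (y k - y (Suc k)))\<^sup>2)"
    unfolding Eform_def
  proof (rule sum.cong[OF refl])
    fix k
    have "complex_of_real (sk k) * u k + complex_of_real (tk k) * u (Suc k)
          = complex_of_real (a k) * y k + complex_of_real (b k) * y (Suc k)"
      by (simp add: uy a_def b_def)
    then show "(cmod (complex_of_real (sk k) * u k + complex_of_real (tk k) * u (Suc k)))\<^sup>2 =
      (a k + b k) * (a k * (cmod (y k))\<^sup>2 + b k * (cmod (y (Suc k)))\<^sup>2) - a k * b k * (cmod (y k - y (Suc k)))\<^sup>2"
      by (simp add: term_id)
  qed
  also have "\<dots> = (\<Sum>k\<le>N. (a k + b k) * a k * (cmod (y k))\<^sup>2) + (\<Sum>k\<le>N. h (Suc k))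
                 - (\<Sum>k\<le>N. a k * b k * (cmod (y k - y (Suc k)))\<^sup>2)"
  proof -
    have "\<And>k. (a k + b k) * (a k * (cmod (y k))\<^sup>2 + b k * (cmod (y (Suc k)))\<^sup>2)
                      - a k * b k * (cmod (y k - y (Suc k)))\<^sup>2
          = (a k + b k) * a k * (cmod (y k))\<^sup>2 + h (Suc k) - a k * b k * (cmod (y k - y (Suc k)))\<^sup>2"
    proof -
      fix k
      have sq: "sqrt (1 + real k) * (sqrt (1 + real k) * z) = (1 + real k) * z" for z
        by (simp add: mult.assoc[symmetric])
      show "(a k + b k) * (a k * (cmod (y k))\<^sup>2 + b k * (cmod (y (Suc k)))\<^sup>2)
                      - a k * b k * (cmod (y k - y (Suc k)))\<^sup>2
          = (a k + b k) * a k * (cmod (y k))\<^sup>2 + h (Suc k) - a k * b k * (cmod (y k - y (Suc k)))\<^sup>2"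
        by (simp add: h_def a_def b_def tk_def algebra_simps sq)
    qed
    then show ?thesis by (simp add: sum.distrib sum_subtractf)
  qed
  also have "(\<Sum>k\<le>N. h (Suc k)) = (\<Sum>k\<le>N. h k)"
  proof -
    have "(\<Sum>k\<le>Suc N. h k) = h 0 + (\<Sum>k\<le>N. h (Suc k))" by (rule sum.atMost_Suc_shift)
    moreover have "(\<Sum>k\<le>Suc N. h k) = (\<Sum>k\<le>N. h k) + h (Suc N)" by simp
    moreover have "h 0 = 0" by (simp add: h_def)
    moreover have "h (Suc N) = 0" by (simp add: h_def wN)
    ultimately show ?thesis by simp
  qed
  also have "(\<Sum>k\<le>N. (a k + b k) * a k * (cmod (y k))\<^sup>2) + (\<Sum>k\<le>N. h k) = lam * (\<Sum>k\<le>N. (cmod (u k))\<^sup>2)"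
  proof -
    have "\<And>k. k \<le> N \<Longrightarrow> (a k + b k) * a k * (cmod (y k))\<^sup>2 + h k = lam * (cmod (u k))\<^sup>2"
    proof -
      fix k assume kN: "k \<le> N"
      have "(a k + b k) * a k * (cmod (y k))\<^sup>2 + h k
          = w k * (((sk k)\<^sup>2 + (sqrt (real k))\<^sup>2) * w k + sk k * tk k * w (Suc k)
              + sqrt (real k) * sk (k - 1) * w (k - 1)) * (cmod (y k))\<^sup>2"
        by (simp add: a_def b_def h_def power2_eq_square algebra_simps)
      also have "\<dots> = lam * (w k)\<^sup>2 * (cmod (y k))\<^sup>2"
        using eig[OF kN] by (simp add: sk_sq)
      also have "\<dots> = lam * (cmod (u k))\<^sup>2"
        by (simp add: uy norm_mult power_mult_distrib)
      finally show "(a k + b k) * a k * (cmod (y k))\<^sup>2 + h k = lam * (cmod (u k))\<^sup>2" .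
    qed
    then show ?thesis by (simp add: sum.distrib[symmetric] sum_distrib_left)
  qed
  finally show ?thesis by (simp add: a_def b_def mult_ac)
qed

lemma cmod_lin_sq:
  "(cmod (complex_of_real p * a + complex_of_real q * b))\<^sup>2
     = p\<^sup>2 * (cmod a)\<^sup>2 + q\<^sup>2 * (cmod b)\<^sup>2 + 2 * p * q * Re (a * cnj b)"
  unfolding cmod_power2 by (simp add: power2_eq_square algebra_simps)

lemma Re_ge: "Re (a * cnj b) \<ge> - (cmod a * cmod b)"
proof -
  have "\<bar>Re (a * cnj b)\<bar> \<le> cmod (a * cnj b)" by (rule abs_Re_le_cmod)
  then show ?thesis by (simp add: norm_mult)
qed

lemma quad_nonneg:
  fixes al ga de x y :: real
  assumes "al > 0" "de\<^sup>2 \<le> al * ga"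
  shows "al * x\<^sup>2 + ga * y\<^sup>2 - 2 * de * x * y \<ge> 0"
proof -
  have "al * (al * x\<^sup>2 + ga * y\<^sup>2 - 2 * de * x * y) = (al * x - de * y)\<^sup>2 + (al * ga - de\<^sup>2) * y\<^sup>2"
    by (simp add: power2_eq_square algebra_simps)
  also have "\<dots> \<ge> 0" using assms by simp
  finally show ?thesis using assms(1) by (simp add: zero_le_mult_iff)
qed


lemma delta_bound:
  fixes A :: real
  assumes A: "A \<ge> 1"
  shows "A / (sqrt (A - 1/2) + sqrt (A + 1/2))\<^sup>2 \<le> 1/4 + 1 / (16 * A * (A + 1))"
proof -
  let ?s = "sqrt (A - 1/2)" and ?s' = "sqrt (A + 1/2)"
  have s2: "?s\<^sup>2 = A - 1/2" "?s'\<^sup>2 = A + 1/2" using A by simp_all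
  have S2: "(?s * ?s')\<^sup>2 = A\<^sup>2 - 1/4"
    unfolding power_mult_distrib s2 by (simp add: power2_eq_square algebra_simps)
  have lb: "A - 1 / (6 * A) \<le> ?s * ?s'"
  proof (rule power2_le_imp_le)
    have "(A - 1 / (6 * A))\<^sup>2 = A\<^sup>2 - 1/3 + 1 / (36 * A\<^sup>2)"
      using A by (simp add: power2_eq_square field_simps)
    also have "\<dots> \<le> A\<^sup>2 - 1/4"
    proof -
      have A2: "A\<^sup>2 \<ge> 1" using A by (simp add: one_le_power)
      have "1 / (36 * A\<^sup>2) \<le> 1 / 36" using A2 by (intro divide_left_mono) auto
      then show ?thesis by simp
    qed
    finally show "(A - 1 / (6 * A))\<^sup>2 \<le> (?s * ?s')\<^sup>2" using S2 by simp
    show "0 \<le> ?s * ?s'" using A by simp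
  qed
  have P: "(?s + ?s')\<^sup>2 = 2 * A + 2 * (?s * ?s')"
    unfolding power2_sum s2 by simp
  have P2: "(?s + ?s')\<^sup>2 \<ge> 4 * A - 1 / (3 * A)"
    using P lb by (simp add: field_simps)
  have pos: "4 * A - 1 / (3 * A) > 0"
  proof -
    have "1 / (3 * A) \<le> 1" using A by simp
    then show ?thesis using A by linarith
  qed
  have "A / (?s + ?s')\<^sup>2 \<le> A / (4 * A - 1 / (3 * A))"
  proof (rule divide_left_mono)
    show "4 * A - 1 / (3 * A) \<le> (?s + ?s')\<^sup>2" by (rule P2)
    show "0 \<le> A" using A by simp
    have "(?s + ?s')\<^sup>2 > 0" using P2 pos by linarith
    then show "0 < (?s + ?s')\<^sup>2 * (4 * A - 1 / (3 * A))" using pos by simp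
  qed
  also have "\<dots> \<le> 1/4 + 1 / (16 * A * (A + 1))"
  proof -
    have "A / (4 * A - 1 / (3 * A)) = 3 * A\<^sup>2 / (12 * A\<^sup>2 - 1)"
      using A by (simp add: field_simps power2_eq_square)
    also have "\<dots> \<le> 1/4 + 1 / (16 * A * (A + 1))"
    proof -
      have "A\<^sup>2 \<ge> 1" using A by (simp add: one_le_power)
      then have d1: "12 * A\<^sup>2 - 1 > 0" by simp
      have d2: "16 * A * (A + 1) > 0" using A by simp
      have key: "8 * A\<^sup>2 - 4 * A - 1 \<ge> 0"
      proof -
        have "A\<^sup>2 \<ge> A" using A by (simp add: power2_eq_square)
        then show ?thesis using A by simp
      qed
      have "3 * A\<^sup>2 * (16 * A * (A + 1)) \<le> (12 * A\<^sup>2 - 1) * (4 * A * (A + 1) + 1)"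
        using key by (simp add: power2_eq_square algebra_simps)
      then show ?thesis using d1 d2 by (simp add: field_simps)
    qed
    finally show ?thesis .
  qed
  finally show ?thesis .
qed



lemma odd_local:
  "(cmod (complex_of_real (tk k) * a + complex_of_real (sk (Suc k)) * b))\<^sup>2
     - (cmod (complex_of_real (sk k) * a + complex_of_real (tk k) * b))\<^sup>2
   \<ge> (cmod b)\<^sup>2 / (4 * (real k + 2)) - (cmod a)\<^sup>2 / (4 * (real k + 1))"
proof -
  define A where "A = real k + 1"
  have A1: "A \<ge> 1" by (simp add: A_def)
  define s where "s = sqrt (A - 1/2)"
  define s' where "s' = sqrt (A + 1/2)"
  define t where "t = sqrt A"
  have ss: "sk k = s" "sk (Suc k) = s'" "tk k = t"
    by (simp_all add: s_def s'_def t_def sk_def tk_def A_def algebra_simps)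
  have sq: "s\<^sup>2 = A - 1/2" "s'\<^sup>2 = A + 1/2" "t\<^sup>2 = A"
    using A1 by (simp_all add: s_def s'_def t_def)
  define de where "de = t * (s' - s)"
  define x where "x = cmod a"
  define y where "y = cmod b"
  have LHS: "(cmod (complex_of_real t * a + complex_of_real s' * b))\<^sup>2
     - (cmod (complex_of_real s * a + complex_of_real t * b))\<^sup>2
     = 1/2 * x\<^sup>2 + 1/2 * y\<^sup>2 + 2 * de * Re (a * cnj b)"
    unfolding cmod_lin_sq sq x_def y_def de_def by (simp add: algebra_simps)
  have s_le: "s \<le> s'" unfolding s_def s'_def by simp
  have de0: "de \<ge> 0" unfolding de_def t_def using s_le A1 by (intro mult_nonneg_nonneg) auto
  have "2 * de * Re (a * cnj b) \<ge> - (2 * de * x * y)"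
    using mult_left_mono[OF Re_ge[of a b], of "2 * de"] de0 by (simp add: x_def y_def)
  moreover have "(1/2 + 1 / (4 * A)) * x\<^sup>2 + (1/2 - 1 / (4 * (A + 1))) * y\<^sup>2 - 2 * de * x * y \<ge> 0"
  proof (rule quad_nonneg)
    show "1/2 + 1 / (4 * A) > 0" using A1 by (simp add: add_pos_nonneg)
    have spos: "s + s' > 0" using A1 by (simp add: s_def s'_def add_pos_nonneg)
    have diff: "(s' - s) * (s + s') = 1"
      using sq by (simp add: algebra_simps power2_eq_square)
    have "de\<^sup>2 = A * (s' - s)\<^sup>2" by (simp add: de_def power_mult_distrib sq)
    also have "(s' - s) = 1 / (s + s')" using diff spos by (simp add: field_simps)
    also have "A * (1 / (s + s'))\<^sup>2 = A / (s + s')\<^sup>2" by (simp add: power_divide)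
    also have "\<dots> \<le> 1/4 + 1 / (16 * A * (A + 1))"
      unfolding s_def s'_def by (rule delta_bound[OF A1])
    also have "\<dots> = (1/2 + 1 / (4 * A)) * (1/2 - 1 / (4 * (A + 1)))"
    proof -
      have n: "A \<noteq> 0" "A + 1 \<noteq> 0" using A1 by auto
      have e1: "1/2 + 1 / (4 * A) = (2 * A + 1) / (4 * A)" using n by (simp add: field_simps)
      have e2: "1/2 - 1 / (4 * (A + 1)) = (2 * A + 1) / (4 * (A + 1))" using n by (simp add: field_simps)
      have e3: "1/4 + 1 / (16 * A * (A + 1)) = (4 * A * (A + 1) + 1) / (16 * A * (A + 1))"
      proof -
        define X where "X = 4 * A * (A + 1)"
        have X0: "X \<noteq> 0" using n by (simp add: X_def)
        have D: "16 * A * (A + 1) = 4 * X" by (simp add: X_def)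
        have "(X + 1) / (4 * X) = X / (4 * X) + 1 / (4 * X)" by (rule add_divide_distrib)
        also have "X / (4 * X) = 1/4" using X0 by simp
        finally show ?thesis unfolding D X_def[symmetric] by simp
      qed
      have e4: "4 * A * (A + 1) + 1 = (2 * A + 1) * (2 * A + 1)" by (simp add: algebra_simps)
      show ?thesis unfolding e1 e2 e3 e4 by simp
    qed
    finally show "de\<^sup>2 \<le> (1/2 + 1 / (4 * A)) * (1/2 - 1 / (4 * (A + 1)))" .
  qed
  ultimately have "1/2 * x\<^sup>2 + 1/2 * y\<^sup>2 + 2 * de * Re (a * cnj b) \<ge> y\<^sup>2 / (4 * (A + 1)) - x\<^sup>2 / (4 * A)"
    by (simp add: algebra_simps)
  then show ?thesis unfolding ss LHS by (simp add: x_def y_def A_def add.commute)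
qed

lemma odd_ge_even:
  assumes v0: "v N = 0" "v (Suc N) = 0"
  shows "Oform N v \<ge> Eform N v"
proof -
  define Ot where "Ot k = (cmod (complex_of_real (sqrt (real k)) * v (k - 1) + complex_of_real (sk k) * v k))\<^sup>2" for k
  define Et where "Et k = (cmod (complex_of_real (sk k) * v k + complex_of_real (tk k) * v (Suc k)))\<^sup>2" for k
  define f where "f k = (cmod (v k))\<^sup>2 / (4 * (real k + 1))" for k
  have Os: "Oform N v = Ot 0 + (\<Sum>k<N. Ot (Suc k))"
    unfolding Oform_def Ot_def lessThan_Suc_atMost[symmetric] by (simp only: sum.lessThan_Suc_shift)
  have Es: "Eform N v = (\<Sum>k<N. Et k) + Et N"
    unfolding Eform_def Et_def lessThan_Suc_atMost[symmetric] by simp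
  have EN: "Et N = 0" by (simp add: Et_def v0)
  have O0: "Ot 0 = (cmod (v 0))\<^sup>2 / 2"
    by (simp add: Ot_def norm_mult sk_def power_mult_distrib)
  have loc: "\<And>k. Ot (Suc k) - Et k \<ge> f (Suc k) - f k"
  proof -
    fix k
    have "sqrt (real (Suc k)) = tk k" by (simp add: tk_def add.commute)
    then have "Ot (Suc k) - Et k = (cmod (complex_of_real (tk k) * v k + complex_of_real (sk (Suc k)) * v (Suc k)))\<^sup>2
     - (cmod (complex_of_real (sk k) * v k + complex_of_real (tk k) * v (Suc k)))\<^sup>2"
      by (simp add: Ot_def Et_def)
    also have "\<dots> \<ge> (cmod (v (Suc k)))\<^sup>2 / (4 * (real k + 2)) - (cmod (v k))\<^sup>2 / (4 * (real k + 1))"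
      by (rule odd_local)
    finally show "Ot (Suc k) - Et k \<ge> f (Suc k) - f k" by (simp add: f_def add.commute)
  qed
  have "(\<Sum>k<N. Ot (Suc k) - Et k) \<ge> (\<Sum>k<N. f (Suc k) - f k)"
    by (rule sum_mono) (rule loc)
  also have "(\<Sum>k<N. f (Suc k) - f k) = f N - f 0" by (rule sum_lessThan_telescope)
  finally have "(\<Sum>k<N. Ot (Suc k)) - (\<Sum>k<N. Et k) \<ge> - f 0"
    by (simp add: sum_subtractf f_def v0)
  moreover have "f 0 = (cmod (v 0))\<^sup>2 / 4" by (simp add: f_def)
  moreover have "(cmod (v 0))\<^sup>2 \<ge> 0" by simp
  ultimately show ?thesis unfolding Os Es EN O0 by linarith
qed


lemma gs_bound_eq:
  fixes w :: "nat \<Rightarrow> real" and u :: "nat \<Rightarrow> complex"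
  assumes supp_w: "\<And>k. w k \<noteq> 0 \<longleftrightarrow> (M \<le> k \<and> k \<le> N)"
    and alt: "\<And>k. M \<le> k \<Longrightarrow> k < N \<Longrightarrow> w k * w (Suc k) < 0"
    and eig: "\<And>k. k \<le> N \<Longrightarrow> w k * ((2 * real k + 1/2) * w k + sk k * tk k * w (Suc k)
                      + sqrt (real k) * sk (k - 1) * w (k - 1)) = lam * (w k)\<^sup>2"
    and supp_u: "\<And>k. u k \<noteq> 0 \<Longrightarrow> M \<le> k \<and> k \<le> N"
  shows "Eform N u \<ge> lam * (\<Sum>k\<le>N. (cmod (u k))\<^sup>2)"
    and "Eform N u = lam * (\<Sum>k\<le>N. (cmod (u k))\<^sup>2) \<Longrightarrow> \<exists>\<kappa>. \<forall>k. u k = \<kappa> * complex_of_real (w k)"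
proof -
  define y where "y k = u k / complex_of_real (w k)" for k
  have uy: "\<And>k. u k = complex_of_real (w k) * y k"
  proof -
    fix k show "u k = complex_of_real (w k) * y k"
    proof (cases "w k = 0")
      case True
      then have "u k = 0" using supp_w[of k] supp_u[of k] by blast
      then show ?thesis using True by (simp add: y_def)
    next
      case False then show ?thesis by (simp add: y_def)
    qed
  qed
  have wN: "w (Suc N) = 0" using supp_w[of "Suc N"] by simp
  define T where "T k = sk k * tk k * w k * w (Suc k) * (cmod (y k - y (Suc k)))\<^sup>2" for k
  have id: "Eform N u = lam * (\<Sum>k\<le>N. (cmod (u k))\<^sup>2) - (\<Sum>k\<le>N. T k)"
    unfolding T_def by (rule gs_identity[OF uy eig wN])
  have ww: "\<And>k. k \<le> N \<Longrightarrow> w k * w (Suc k) \<le> 0"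
  proof -
    fix k assume kN: "k \<le> N"
    show "w k * w (Suc k) \<le> 0"
    proof (cases "M \<le> k \<and> k < N")
      case True then show ?thesis using alt[of k] by simp
    next
      case False
      then have "k < M \<or> k = N" using kN by auto
      then have "w k = 0 \<or> w (Suc k) = 0" using supp_w[of k] wN by auto
      then show ?thesis by auto
    qed
  qed
  have Tle: "\<And>k. k \<le> N \<Longrightarrow> T k \<le> 0"
  proof -
    fix k assume kN: "k \<le> N"
    have "sk k * tk k * (w k * w (Suc k)) \<le> 0"
      using ww[OF kN] sk_pos[of k] tk_pos[of k] by (simp add: mult_nonneg_nonpos)
    moreover have "T k = (sk k * tk k * (w k * w (Suc k))) * (cmod (y k - y (Suc k)))\<^sup>2"
      unfolding T_def by (simp add: mult_ac)
    ultimately show "T k \<le> 0" by (simp add: mult_nonpos_nonneg)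
  qed
  then have Tsum: "(\<Sum>k\<le>N. T k) \<le> 0" by (intro sum_nonpos) auto
  then show "Eform N u \<ge> lam * (\<Sum>k\<le>N. (cmod (u k))\<^sup>2)" unfolding id by simp
  assume eq: "Eform N u = lam * (\<Sum>k\<le>N. (cmod (u k))\<^sup>2)"
  then have "(\<Sum>k\<le>N. - T k) = 0" unfolding id by (simp add: sum_negf)
  then have T0: "\<And>k. k \<le> N \<Longrightarrow> T k = 0"
    using sum_nonneg_eq_0_iff[of "{..N}" "\<lambda>k. - T k"] Tle by fastforce
  have step: "\<And>k. M \<le> k \<Longrightarrow> k < N \<Longrightarrow> y (Suc k) = y k"
  proof -
    fix k assume k: "M \<le> k" "k < N"
    have "sk k * tk k * (w k * w (Suc k)) \<noteq> 0"
      using alt[OF k] sk_pos[of k] tk_pos[of k] by (auto simp: mult_eq_0_iff)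
    moreover have "sk k * tk k * (w k * w (Suc k)) * (cmod (y k - y (Suc k)))\<^sup>2 = 0"
      using T0[of k] k unfolding T_def by (simp add: mult.assoc)
    ultimately show "y (Suc k) = y k" by simp
  qed
  have yM: "\<And>k. M \<le> k \<Longrightarrow> k \<le> N \<Longrightarrow> y k = y M"
  proof -
    fix k assume "M \<le> k" "k \<le> N"
    then show "y k = y M"
    proof (induction k)
      case 0 then show ?case by simp
    next
      case (Suc k)
      show ?case
      proof (cases "M = Suc k")
        case True then show ?thesis by simp
      next
        case False
        then have "M \<le> k" using Suc.prems by simp
        then show ?thesis using Suc.IH Suc.prems step[of k] by simp
      qed
    qed
  qed
  show "\<exists>\<kappa>. \<forall>k. u k = \<kappa> * complex_of_real (w k)"
  proof (intro exI allI)
    fix k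
    show "u k = y M * complex_of_real (w k)"
    proof (cases "M \<le> k \<and> k \<le> N")
      case True then show ?thesis using uy[of k] yM[of k] by (simp add: mult.commute)
    next
      case False
      then have "w k = 0" using supp_w[of k] by blast
      moreover then have "u k = 0" using uy[of k] by simp
      ultimately show ?thesis by simp
    qed
  qed
qed

lemma odd_bound_eq:
  fixes w :: "nat \<Rightarrow> real" and v :: "nat \<Rightarrow> complex"
  assumes supp_w: "\<And>k. w k \<noteq> 0 \<longleftrightarrow> (M \<le> k \<and> k \<le> N)"
    and alt: "\<And>k. M \<le> k \<Longrightarrow> k < N \<Longrightarrow> w k * w (Suc k) < 0"
    and eig: "\<And>k. k \<le> N \<Longrightarrow> w k * ((2 * real k + 1/2) * w k + sk k * tk k * w (Suc k)
                      + sqrt (real k) * sk (k - 1) * w (k - 1)) = lam * (w k)\<^sup>2"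
    and supp_v: "\<And>k. v k \<noteq> 0 \<Longrightarrow> M \<le> k \<and> k < N"
    and MN: "M \<le> N"
  shows "Oform N v \<ge> lam * (\<Sum>k\<le>N. (cmod (v k))\<^sup>2)"
    and "Oform N v = lam * (\<Sum>k\<le>N. (cmod (v k))\<^sup>2) \<Longrightarrow> \<forall>k. v k = 0"
proof -
  have su: "\<And>k. v k \<noteq> 0 \<Longrightarrow> M \<le> k \<and> k \<le> N" using supp_v by fastforce
  have vN: "v N = 0" "v (Suc N) = 0" using supp_v[of N] supp_v[of "Suc N"] by auto
  have OE: "Oform N v \<ge> Eform N v" by (rule odd_ge_even[OF vN])
  have EB: "Eform N v \<ge> lam * (\<Sum>k\<le>N. (cmod (v k))\<^sup>2)" by (rule gs_bound_eq(1)[OF supp_w alt eig su])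
  show "Oform N v \<ge> lam * (\<Sum>k\<le>N. (cmod (v k))\<^sup>2)" using OE EB by simp
  assume eq: "Oform N v = lam * (\<Sum>k\<le>N. (cmod (v k))\<^sup>2)"
  then have "Eform N v = lam * (\<Sum>k\<le>N. (cmod (v k))\<^sup>2)" using OE EB by simp
  then obtain \<kappa> where k: "\<forall>k. v k = \<kappa> * complex_of_real (w k)"
    using gs_bound_eq(2)[OF supp_w alt eig su] by blast
  have "w N \<noteq> 0" using supp_w[of N] MN by simp
  then have "\<kappa> = 0" using k vN(1) by auto
  then show "\<forall>k. v k = 0" using k by simp
qed


abbreviation "la n \<equiv> lag_a (-1/2) n"
abbreviation "lb n \<equiv> lag_b (-1/2) n"

lemma la_eq: "la n = 2 * real n + 1/2" by (simp add: lag_a_def)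
lemma lb_eq: "lb n = sqrt (real n * (real n - 1/2))" by (simp add: lag_b_def)
declare la_eq [simp] lb_eq [simp]
lemma lb_pos: "n \<ge> 1 \<Longrightarrow> lb n > 0"
proof -
  assume "n \<ge> 1"
  then have "real n \<ge> 1" by simp
  then have "real n * (real n - 1/2) > 0" by (intro mult_pos_pos) auto
  then show ?thesis by (simp add: lag_b_def)
qed
lemma lb_sq: "n \<ge> 1 \<Longrightarrow> (lb n)\<^sup>2 = real n * (real n - 1/2)"
proof -
  assume "n \<ge> 1"
  then have "real n * (real n - 1/2) \<ge> 0" by simp
  then show ?thesis by (simp add: lag_b_def)
qed

fun fs :: "nat \<Rightarrow> nat \<Rightarrow> real \<Rightarrow> real" where
  "fs M 0 x = 1"
| "fs M (Suc 0) x = (la M - x) / lb (M + 1)"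
| "fs M (Suc (Suc l)) x = ((la (M + Suc l) - x) * fs M (Suc l) x - lb (M + Suc l) * fs M l x) / lb (M + Suc l + 1)"

lemma fs_eq: "fs M j x = (-1) ^ j * lag_assoc (-1/2) M j x"
proof (induction M j x rule: fs.induct)
  case (2 M x)
  have "(la M - x) / lb (M + 1) = (- (x - la M)) / lb (M + 1)" by simp
  also have "\<dots> = - ((x - la M) / lb (M + 1))" by (rule minus_divide_left[symmetric])
  finally show ?case by simp
qed (simp_all add: diff_divide_distrib algebra_simps)

fun qp :: "nat \<Rightarrow> nat \<Rightarrow> real poly" where
  "qp M 0 = 1"
| "qp M (Suc 0) = smult (1 / lb (M + 1)) [:- la M, 1:]"
| "qp M (Suc (Suc l)) = smult (1 / lb (M + Suc l + 1))
      ([:- la (M + Suc l), 1:] * qp M (Suc l) - smult (lb (M + Suc l)) (qp M l))"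

lemma poly_qp: "poly (qp M j) x = lag_assoc (-1/2) M j x"
  by (induction M j rule: qp.induct) (simp_all add: algebra_simps add_divide_distrib[symmetric])

lemma fs_poly: "fs M j = (\<lambda>x. (-1) ^ j * poly (qp M j) x)"
  by (rule ext) (simp add: fs_eq poly_qp)

lemma fs_cont: "continuous_on S (fs M j)"
  unfolding fs_poly by (intro continuous_intros)

lemma fs_pos0:
  assumes x: "x \<le> 0"
  shows "fs M j x > 0 \<and> lb (M + j + 1) * fs M j x \<le> real (M + j + 1) * fs M (Suc j) x"
proof (induction j)
  case 0
  have B: "lb (M + 1) > 0" by (rule lb_pos) simp
  have B2: "(lb (M + 1))\<^sup>2 = real (M + 1) * (real (M + 1) - 1/2)" by (rule lb_sq) simp
  have "(lb (M + 1))\<^sup>2 \<le> real (M + 1) * (la M - x)"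
    unfolding B2 la_eq using x by (intro mult_left_mono) auto
  then have "lb (M + 1) * lb (M + 1) \<le> real (M + 1) * (la M - x)" by (simp add: power2_eq_square)
  then have "lb (M + 1) \<le> real (M + 1) * ((la M - x) / lb (M + 1))"
    using B by (simp add: field_simps)
  then show ?case by simp
next
  case (Suc j)
  define n where "n = M + j + 2"
  define B where "B = lb n"
  define F0 where "F0 = fs M j x"
  define F1 where "F1 = fs M (Suc j) x"
  define F2 where "F2 = fs M (Suc (Suc j)) x"
  have n1: "n \<ge> 1" by (simp add: n_def)
  have Bpos: "B > 0" unfolding B_def using n1 by (rule lb_pos)
  have B2: "B\<^sup>2 = real n * (real n - 1/2)" unfolding B_def using n1 by (rule lb_sq)
  have b1pos: "lb (M + j + 1) > 0" by (rule lb_pos) simp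
  have F0pos: "F0 > 0" using Suc.IH by (simp add: F0_def)
  have IH2: "lb (M + j + 1) * F0 \<le> real (M + j + 1) * F1" using Suc.IH by (simp add: F0_def F1_def)
  have F1pos: "F1 > 0"
  proof -
    have "lb (M + j + 1) * F0 > 0" using b1pos F0pos by simp
    then have "real (M + j + 1) * F1 > 0" using IH2 by linarith
    then show ?thesis by (simp add: zero_less_mult_iff)
  qed
  have rec: "B * F2 = (la (M + Suc j) - x) * F1 - lb (M + Suc j) * F0"
    using Bpos by (simp add: F2_def F1_def F0_def B_def n_def field_simps)
  have "B * F2 \<ge> (real n - 1/2) * F1"
  proof -
    have "(la (M + Suc j) - x) * F1 \<ge> (2 * real (M + j + 1) + 1/2) * F1"
      using x F1pos by (intro mult_right_mono) (auto simp: lag_a_def)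
    moreover have "lb (M + Suc j) * F0 \<le> real (M + j + 1) * F1" using IH2 by simp
    ultimately show ?thesis unfolding rec n_def by (simp add: algebra_simps)
  qed
  then have "real n * (B * F2) \<ge> real n * ((real n - 1/2) * F1)"
    by (intro mult_left_mono) auto
  then have "B * (real n * F2) \<ge> B * (B * F1)"
    unfolding mult.assoc[symmetric] B2[unfolded power2_eq_square] by (simp add: algebra_simps)
  then have "real n * F2 \<ge> B * F1" using Bpos by simp
  have n_eq: "M + Suc j + 1 = n" by (simp add: n_def)
  have "0 < F1 \<and> B * F1 \<le> real n * F2" using F1pos \<open>real n * F2 \<ge> B * F1\<close> by simp
  then show ?case unfolding n_eq B_def[symmetric] F1_def[symmetric] F2_def[symmetric] .
qed

lemma fs_pos_le0: "x \<le> 0 \<Longrightarrow> fs M j x > 0"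
  using fs_pos0 by blast

definition Zs :: "nat \<Rightarrow> nat \<Rightarrow> real set" where "Zs M j = {x. fs M j x = 0}"

lemma Zs_finite: "finite (Zs M j)"
proof -
  have "poly (qp M j) 0 \<noteq> 0"
  proof
    assume "poly (qp M j) 0 = 0"
    then have "fs M j 0 = 0" by (simp add: fs_poly)
    with fs_pos_le0[of 0 M j] show False by simp
  qed
  then have "qp M j \<noteq> 0" by auto
  then have "finite {x. poly (qp M j) x = 0}" by (rule poly_roots_finite)
  moreover have "Zs M j = {x. poly (qp M j) x = 0}" by (simp add: Zs_def fs_poly)
  ultimately show ?thesis by simp
qed

lemma fs_Suc_Suc_at_zero:
  assumes "fs M (Suc j) z = 0"
  shows "fs M (Suc (Suc j)) z = - lb (M + Suc j) * fs M j z / lb (M + Suc j + 1)"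
  using assms by simp

lemma zero_order:
  "Zs M (Suc j) \<noteq> {} \<and> 0 < Min (Zs M (Suc j))
    \<and> (\<forall>x < Min (Zs M (Suc j)). \<forall>i \<le> Suc j. fs M i x > 0)
    \<and> (\<forall>i < Suc j. fs M i (Min (Zs M (Suc j))) > 0)"
proof (induction j)
  case 0
  have B: "lb (M + 1) > 0" by (rule lb_pos) simp
  have Z: "Zs M (Suc 0) = {la M}"
    using B by (auto simp: Zs_def)
  have la: "la M > 0" by (simp add: lag_a_def)
  show ?case
  proof (intro conjI allI impI)
    show "Zs M (Suc 0) \<noteq> {}" using Z by simp
    show "0 < Min (Zs M (Suc 0))" using Z la by simp
    fix x i assume x: "x < Min (Zs M (Suc 0))" and i: "i \<le> Suc 0"
    then have "x < la M" using Z by simp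
    then show "fs M i x > 0" using i B by (cases i) auto
  next
    fix i assume "i < Suc 0"
    then show "fs M i (Min (Zs M (Suc 0))) > 0" by simp
  qed
next
  case (Suc j)
  define z where "z = Min (Zs M (Suc j))"
  have ne: "Zs M (Suc j) \<noteq> {}" and zpos: "0 < z"
    and below: "\<And>x i. x < z \<Longrightarrow> i \<le> Suc j \<Longrightarrow> fs M i x > 0"
    and at: "\<And>i. i < Suc j \<Longrightarrow> fs M i z > 0"
    using Suc.IH by (auto simp: z_def)
  have zin: "z \<in> Zs M (Suc j)" unfolding z_def using Zs_finite ne by (rule Min_in)
  then have fz: "fs M (Suc j) z = 0" by (simp add: Zs_def del: fs.simps)
  have fj: "fs M j z > 0" using at[of j] by simp
  have B1: "lb (M + Suc j) > 0" "lb (M + Suc j + 1) > 0" by (rule lb_pos, simp)+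
  have neg: "fs M (Suc (Suc j)) z < 0"
    using fz fj B1 by (simp add: divide_neg_pos)
  have pos0: "fs M (Suc (Suc j)) 0 > 0" by (rule fs_pos_le0) simp
  have "\<exists>x. 0 \<le> x \<and> x \<le> z \<and> fs M (Suc (Suc j)) x = 0"
    by (rule IVT2') (use neg pos0 zpos fs_cont in \<open>auto simp del: fs.simps\<close>)
  then obtain xi where xi: "0 \<le> xi" "xi \<le> z" "fs M (Suc (Suc j)) xi = 0" by blast
  have xiz: "xi < z" using xi neg by (cases "xi = z") auto
  let ?Z = "Zs M (Suc (Suc j))"
  have xiZ: "xi \<in> ?Z" using xi by (simp add: Zs_def del: fs.simps)
  then have ne2: "?Z \<noteq> {}" by auto
  define zz where "zz = Min ?Z"
  have zzin: "zz \<in> ?Z" unfolding zz_def using Zs_finite ne2 by (rule Min_in)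
  have zzle: "zz \<le> xi" unfolding zz_def using Zs_finite xiZ by (rule Min_le)
  have zzmin: "\<And>y. y \<in> ?Z \<Longrightarrow> zz \<le> y" unfolding zz_def using Zs_finite by (rule Min_le)
  have zzpos: "0 < zz"
  proof (rule ccontr)
    assume "\<not> 0 < zz"
    then have "fs M (Suc (Suc j)) zz > 0" by (intro fs_pos_le0) simp
    with zzin show False by (simp add: Zs_def del: fs.simps)
  qed
  have zzz: "zz < z" using zzle xiz by simp
  have below2: "\<And>x. x < zz \<Longrightarrow> fs M (Suc (Suc j)) x > 0"
  proof -
    fix x assume x: "x < zz"
    show "fs M (Suc (Suc j)) x > 0"
    proof (cases "x \<le> 0")
      case True then show ?thesis by (rule fs_pos_le0)
    next
      case False
      show ?thesis
      proof (rule ccontr)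
        assume "\<not> fs M (Suc (Suc j)) x > 0"
        then have "fs M (Suc (Suc j)) x \<le> 0" by simp
        then have "\<exists>y. 0 \<le> y \<and> y \<le> x \<and> fs M (Suc (Suc j)) y = 0"
          by (intro IVT2') (use pos0 False fs_cont in \<open>auto simp del: fs.simps\<close>)
        then obtain zeta where "0 \<le> zeta" "zeta \<le> x" "fs M (Suc (Suc j)) zeta = 0" by blast
        then have "zeta \<in> ?Z" "zeta < zz" using x by (auto simp: Zs_def simp del: fs.simps)
        then show False using zzmin[of zeta] by simp
      qed
    qed
  qed
  show ?case
  proof (intro conjI allI impI)
    show "?Z \<noteq> {}" by (rule ne2)
    show "0 < Min ?Z" using zzpos by (simp add: zz_def)
    fix x i assume x: "x < Min ?Z" and i: "i \<le> Suc (Suc j)"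
    show "fs M i x > 0"
    proof (cases "i = Suc (Suc j)")
      case True then show ?thesis using below2 x by (simp add: zz_def)
    next
      case False
      then show ?thesis using below[of x i] i x zzz by (simp add: zz_def)
    qed
  next
    fix i assume i: "i < Suc (Suc j)"
    then show "fs M i (Min ?Z) > 0" using below[of "Min ?Z" i] zzz by (simp add: zz_def)
  qed
qed


lemma sum_even_odd: "(\<Sum>j<2*(n::nat). f j) = (\<Sum>k<n. f (2*k) + f (2*k+1))"
  by (induction n) (auto simp: add.assoc)

lemma sum_atMost_2N1: "(\<Sum>j\<le>Suc (2*(N::nat)). f j) = (\<Sum>k\<le>N. f (2*k) + f (2*k+1))"
proof -
  have "(\<Sum>j\<le>Suc (2*N). f j) = (\<Sum>j<2*Suc N. f j)"
    by (simp add: lessThan_Suc_atMost[symmetric])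
  also have "\<dots> = (\<Sum>k<Suc N. f (2*k) + f (2*k+1))" by (rule sum_even_odd)
  also have "\<dots> = (\<Sum>k\<le>N. f (2*k) + f (2*k+1))" by (simp add: lessThan_Suc_atMost)
  finally show ?thesis .
qed

lemma dd_odd: "dd c (2*k+1) = complex_of_real (sk k) * c (2*k) + complex_of_real (tk k) * c (Suc (2*k+1))"
proof -
  have e1: "sqrt (real (2*k+1) / 2) = sk k" unfolding sk_def by (simp add: field_simps)
  have e2: "sqrt (real (Suc (2*k+1)) / 2) = tk k" unfolding tk_def by (simp add: field_simps)
  show ?thesis unfolding dd_def e1[symmetric] e2[symmetric] by simp
qed

lemma dd_even: "dd c (2*k) = complex_of_real (sqrt (real k)) * c (2*(k - 1) + 1) + complex_of_real (sk k) * c (2*k+1)"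
proof (cases k)
  case 0 then show ?thesis by (simp add: dd_def sk_def)
next
  case (Suc k')
  have e1: "sqrt (real (2*k) / 2) = sqrt (real k)" by simp
  have e2: "sqrt (real (Suc (2*k)) / 2) = sk k" unfolding sk_def by (simp add: field_simps)
  have e3: "2*k - 1 = 2*(k - 1) + 1" using Suc by simp
  show ?thesis unfolding dd_def e1[symmetric] e2[symmetric] e3 by simp
qed

lemma repr:
  fixes c :: "nat \<Rightarrow> complex"
  assumes supp: "\<And>l. c l \<noteq> 0 \<Longrightarrow> 2*M \<le> l \<and> l \<le> 2*N"
  shows "(\<lambda>x. \<Sum>l=2*M..2*N. c l * complex_of_real (herm_h l x))
           = (\<lambda>x. \<Sum>l\<le>2*N. c l * complex_of_real (herm_h l x))"
    and "(wnorm (\<lambda>x. \<Sum>l=2*M..2*N. c l * complex_of_real (herm_h l x)))\<^sup>2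
           = (\<Sum>k\<le>N. (cmod (c (2*k)))\<^sup>2) + (\<Sum>k\<le>N. (cmod (c (2*k+1)))\<^sup>2)"
    and "varS (\<lambda>x. \<Sum>l=2*M..2*N. c l * complex_of_real (herm_h l x))
           = Eform N (\<lambda>k. c (2*k)) + Oform N (\<lambda>k. c (2*k+1))"
    and "(\<lambda>x. \<Sum>l=2*M..2*N. c l * complex_of_real (herm_h l x))
           = (\<lambda>x. \<Sum>k\<le>N. c (2*k) * complex_of_real (herm_h (2*k) x) + c (2*k+1) * complex_of_real (herm_h (2*k+1) x))"
proof -
  have z: "\<And>l. l > 2*N \<Longrightarrow> c l = 0" using supp by force
  show P1: "(\<lambda>x. \<Sum>l=2*M..2*N. c l * complex_of_real (herm_h l x))
           = (\<lambda>x. \<Sum>l\<le>2*N. c l * complex_of_real (herm_h l x))"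
  proof (rule ext, rule sum.mono_neutral_left)
    fix x
    show "finite {..2*N}" by simp
    show "{2*M..2*N} \<subseteq> {..2*N}" by auto
    show "\<forall>i\<in>{..2 * N} - {2 * M..2 * N}. c i * complex_of_real (herm_h i x) = 0"
      using supp by force
  qed
  have P2: "(\<lambda>x. \<Sum>l\<le>2*N. c l * complex_of_real (herm_h l x))
           = (\<lambda>x. \<Sum>l\<le>Suc (2*N). c l * complex_of_real (herm_h l x))"
    using z by simp
  show "(\<lambda>x. \<Sum>l=2*M..2*N. c l * complex_of_real (herm_h l x))
           = (\<lambda>x. \<Sum>k\<le>N. c (2*k) * complex_of_real (herm_h (2*k) x) + c (2*k+1) * complex_of_real (herm_h (2*k+1) x))"
    unfolding P1 P2 by (simp only: sum_atMost_2N1)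
  have "(wnorm (\<lambda>x. \<Sum>l\<le>2*N. c l * complex_of_real (herm_h l x)))\<^sup>2 = (\<Sum>l\<le>2*N. (cmod (c l))\<^sup>2)"
    by (rule wnorm_sq) simp
  also have "\<dots> = (\<Sum>l\<le>Suc (2*N). (cmod (c l))\<^sup>2)" using z by simp
  also have "\<dots> = (\<Sum>k\<le>N. (cmod (c (2*k)))\<^sup>2 + (cmod (c (2*k+1)))\<^sup>2)" by (rule sum_atMost_2N1)
  finally show "(wnorm (\<lambda>x. \<Sum>l=2*M..2*N. c l * complex_of_real (herm_h l x)))\<^sup>2
           = (\<Sum>k\<le>N. (cmod (c (2*k)))\<^sup>2) + (\<Sum>k\<le>N. (cmod (c (2*k+1)))\<^sup>2)"
    unfolding P1 by (simp add: sum.distrib)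
  have "varS (\<lambda>x. \<Sum>l\<le>2*N. c l * complex_of_real (herm_h l x)) = (\<Sum>j\<le>Suc (2*N). (cmod (dd c j))\<^sup>2)"
    by (rule varS_formula) (use z in auto)
  also have "\<dots> = (\<Sum>k\<le>N. (cmod (dd c (2*k)))\<^sup>2 + (cmod (dd c (2*k+1)))\<^sup>2)" by (rule sum_atMost_2N1)
  also have "\<dots> = Oform N (\<lambda>k. c (2*k+1)) + Eform N (\<lambda>k. c (2*k))"
  proof -
    have "\<And>k. dd c (2*k+1) = complex_of_real (sk k) * c (2*k) + complex_of_real (tk k) * c (2 * Suc k)"
      using dd_odd by simp
    moreover have "\<And>k. dd c (2*k) = complex_of_real (sqrt (real k)) * c (2*(k - 1) + 1) + complex_of_real (sk k) * c (2*k+1)"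
      by (rule dd_even)
    ultimately show ?thesis unfolding Oform_def Eform_def by (simp add: sum.distrib)
  qed
  finally show "varS (\<lambda>x. \<Sum>l=2*M..2*N. c l * complex_of_real (herm_h l x))
           = Eform N (\<lambda>k. c (2*k)) + Oform N (\<lambda>k. c (2*k+1))"
    unfolding P1 by simp
qed

lemma lag_fs: "lag_assoc (-1/2) M i x = (-1) ^ i * fs M i x"
  by (simp add: fs_eq)

lemma lag_fs': "lag_assoc (- (1/2)) M i x = (-1) ^ i * fs M i x"
  using lag_fs by simp

lemma lag_rec:
  "lb (M + i + 1) * lag_assoc (-1/2) M (Suc i) x
     = (x - la (M + i)) * lag_assoc (-1/2) M i x - (if i = 0 then 0 else lb (M + i) * lag_assoc (-1/2) M (i - 1) x)"
proof (cases i)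
  case 0
  have "lb (M + 1) > 0" by (rule lb_pos) simp
  then show ?thesis using 0 by simp
next
  case (Suc i')
  have "lb (M + Suc i' + 1) > 0" by (rule lb_pos) simp
  then show ?thesis using Suc by simp
qed

lemma sk_tk_lb: "sk k * tk k = lb (Suc k)"
  by (simp add: sk_def tk_def lag_b_def real_sqrt_mult[symmetric] algebra_simps)

lemma sqrt_sk_lb: "k \<ge> 1 \<Longrightarrow> sqrt (real k) * sk (k - 1) = lb k"
  by (simp add: sk_def lag_b_def real_sqrt_mult[symmetric] of_nat_diff algebra_simps)

locale zsetup =
  fixes M N :: nat
  assumes MN: "M \<le> N"
begin

definition lam where "lam = Min (Zs M (Suc (N - M)))"

definition wv where "wv k = (if M \<le> k \<and> k \<le> N then lag_assoc (-1/2) M (k - M) lam else 0)"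

lemma zo: "\<And>i. i \<le> N - M \<Longrightarrow> fs M i lam > 0" "fs M (Suc (N - M)) lam = 0"
proof -
  have zo: "Zs M (Suc (N - M)) \<noteq> {} \<and> 0 < lam
    \<and> (\<forall>x < lam. \<forall>i \<le> Suc (N - M). fs M i x > 0)
    \<and> (\<forall>i < Suc (N - M). fs M i lam > 0)"
    unfolding lam_def by (rule zero_order)
  then show "\<And>i. i \<le> N - M \<Longrightarrow> fs M i lam > 0" by auto
  have "lam \<in> Zs M (Suc (N - M))" unfolding lam_def using Zs_finite zo by (intro Min_in) auto
  then show "fs M (Suc (N - M)) lam = 0" by (simp add: Zs_def)
qed

lemma wv_supp: "wv k \<noteq> 0 \<longleftrightarrow> (M \<le> k \<and> k \<le> N)"
proof (cases "M \<le> k \<and> k \<le> N")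
  case True
  then have "k - M \<le> N - M" by (simp add: diff_le_mono)
  then have "fs M (k - M) lam > 0" using zo(1)[of "k - M"] by simp
  then show ?thesis using True by (simp add: wv_def lag_fs')
next
  case False then show ?thesis by (auto simp: wv_def)
qed

lemma wv_alt: "M \<le> k \<Longrightarrow> k < N \<Longrightarrow> wv k * wv (Suc k) < 0"
proof -
  assume k: "M \<le> k" "k < N"
  have p1: "fs M (k - M) lam > 0" using zo(1)[of "k - M"] k by simp
  have p2: "fs M (Suc (k - M)) lam > 0" using zo(1)[of "Suc (k - M)"] k by simp
  have e: "Suc k - M = Suc (k - M)" using k by simp
  have "wv k * wv (Suc k) = (-1) ^ (k - M) * (-1) ^ Suc (k - M) * (fs M (k - M) lam * fs M (Suc (k - M)) lam)"
    using k by (simp add: wv_def lag_fs' e)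
  also have "(-1::real) ^ (k - M) * (-1) ^ Suc (k - M) = -1"
    by (simp add: power_Suc mult.assoc[symmetric] power2_eq_square[symmetric] power_mult[symmetric] mult.commute)
  finally show ?thesis using p1 p2 by simp
qed

lemma wv_Suc: "M \<le> k \<Longrightarrow> k \<le> N \<Longrightarrow> wv (Suc k) = lag_assoc (-1/2) M (Suc (k - M)) lam"
proof -
  assume k: "M \<le> k" "k \<le> N"
  show ?thesis
  proof (cases "k = N")
    case True
    then have "lag_assoc (-1/2) M (Suc (k - M)) lam = 0" using zo(2) True by (simp add: lag_fs')
    then show ?thesis using True by (simp add: wv_def)
  next
    case False
    then show ?thesis using k by (simp add: wv_def Suc_diff_le)
  qed
qed

lemma wv_eig: "k \<le> N \<Longrightarrow> wv k * ((2 * real k + 1/2) * wv k + sk k * tk k * wv (Suc k)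
                      + sqrt (real k) * sk (k - 1) * wv (k - 1)) = lam * (wv k)\<^sup>2"
proof -
  assume kN: "k \<le> N"
  show ?thesis
  proof (cases "M \<le> k")
    case False then show ?thesis by (simp add: wv_def)
  next
    case True
    define i where "i = k - M"
    have ki: "k = M + i" using True by (simp add: i_def)
    have rec: "lb (M + i + 1) * lag_assoc (-1/2) M (Suc i) lam
      = (lam - la (M + i)) * lag_assoc (-1/2) M i lam - (if i = 0 then 0 else lb (M + i) * lag_assoc (-1/2) M (i - 1) lam)"
      by (rule lag_rec)
    have w1: "wv (Suc k) = lag_assoc (-1/2) M (Suc i) lam" using wv_Suc[OF True kN] by (simp add: i_def)
    have w0: "wv k = lag_assoc (-1/2) M i lam" using True kN by (simp add: wv_def i_def)
    have wm: "sqrt (real k) * sk (k - 1) * wv (k - 1) = (if i = 0 then 0 else lb (M + i) * lag_assoc (-1/2) M (i - 1) lam)"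
    proof (cases "i = 0")
      case True
      then show ?thesis
      proof (cases "k = 0")
        case False
        then have "wv (k - 1) = 0" using \<open>i = 0\<close> ki by (simp add: wv_def)
        then show ?thesis using True by simp
      qed simp
    next
      case False
      then have "k \<ge> 1" using ki by simp
      moreover have "wv (k - 1) = lag_assoc (-1/2) M (i - 1) lam"
      proof -
        have "M \<le> k - 1" "k - 1 \<le> N" "k - 1 - M = i - 1" using False ki kN by auto
        then show ?thesis by (simp add: wv_def)
      qed
      ultimately show ?thesis using False sqrt_sk_lb[of k] ki by simp
    qed
    have "(2 * real k + 1/2) * wv k + sk k * tk k * wv (Suc k) + sqrt (real k) * sk (k - 1) * wv (k - 1) = lam * wv k"
      unfolding wm w1 w0 sk_tk_lb using rec ki by (simp add: lag_a_def algebra_simps)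
    then show ?thesis by (simp add: power2_eq_square)
  qed
qed


definition cH where "cH l = (if even l then complex_of_real (wv (l div 2)) else 0)"

definition Hf where "Hf x = complex_of_real (\<Sum>l=M..N. lag_assoc (-1/2) M (l - M) lam * herm_h (2 * l) x)"

lemma cH_supp: "cH l \<noteq> 0 \<Longrightarrow> 2*M \<le> l \<and> l \<le> 2*N"
proof -
  assume "cH l \<noteq> 0"
  then have "even l" "wv (l div 2) \<noteq> 0" by (auto simp: cH_def split: if_splits)
  then have "M \<le> l div 2" "l div 2 \<le> N" using wv_supp by auto
  with \<open>even l\<close> show ?thesis by (auto elim!: evenE)
qed

lemma Hf_repr: "Hf = (\<lambda>x. \<Sum>l=2*M..2*N. cH l * complex_of_real (herm_h l x))"
proof -
  have r: "(\<lambda>x. \<Sum>l=2*M..2*N. cH l * complex_of_real (herm_h l x))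
     = (\<lambda>x. \<Sum>k\<le>N. cH (2*k) * complex_of_real (herm_h (2*k) x) + cH (2*k+1) * complex_of_real (herm_h (2*k+1) x))"
    by (rule repr(4)) (rule cH_supp)
  show ?thesis unfolding r
  proof (rule ext)
    fix x
    have "Hf x = (\<Sum>l=M..N. complex_of_real (wv l) * complex_of_real (herm_h (2 * l) x))"
      unfolding Hf_def of_real_sum of_real_mult by (rule sum.cong) (auto simp: wv_def)
    also have "\<dots> = (\<Sum>l\<le>N. complex_of_real (wv l) * complex_of_real (herm_h (2 * l) x))"
      by (rule sum.mono_neutral_left) (auto simp: wv_def)
    also have "\<dots> = (\<Sum>k\<le>N. cH (2*k) * complex_of_real (herm_h (2*k) x) + cH (2*k+1) * complex_of_real (herm_h (2*k+1) x))"
      by (simp add: cH_def)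
    finally show "Hf x = (\<Sum>k\<le>N. cH (2*k) * complex_of_real (herm_h (2*k) x) + cH (2*k+1) * complex_of_real (herm_h (2*k+1) x))" .
  qed
qed

lemma cH_r4: "(\<lambda>x. \<Sum>l=2*M..2*N. cH l * complex_of_real (herm_h l x))
     = (\<lambda>x. \<Sum>k\<le>N. cH (2*k) * complex_of_real (herm_h (2*k) x) + cH (2*k+1) * complex_of_real (herm_h (2*k+1) x))"
  by (rule repr(4)) (rule cH_supp)

lemma PiH_coeffs:
  assumes "P \<in> PiH_from (2*M) (2*N)"
  obtains c where "\<And>l. c l \<noteq> 0 \<Longrightarrow> 2*M \<le> l \<and> l \<le> 2*N"
    "P = (\<lambda>x. \<Sum>l=2*M..2*N. c l * complex_of_real (herm_h l x))"
proof -
  obtain c where P: "P = (\<lambda>x. \<Sum>l=2*M..2*N. c l * complex_of_real (herm_h l x))"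
    using assms unfolding PiH_from_def by blast
  define c' where "c' l = (if 2*M \<le> l \<and> l \<le> 2*N then c l else 0)" for l
  have "P = (\<lambda>x. \<Sum>l=2*M..2*N. c' l * complex_of_real (herm_h l x))"
    unfolding P by (intro ext sum.cong) (auto simp: c'_def)
  moreover have "\<And>l. c' l \<noteq> 0 \<Longrightarrow> 2*M \<le> l \<and> l \<le> 2*N" by (auto simp: c'_def split: if_splits)
  ultimately show ?thesis using that by blast
qed

lemma lower_eq:
  assumes "P \<in> PiH_from (2*M) (2*N)"
  shows "varS P \<ge> lam * (wnorm P)\<^sup>2"
    and "varS P = lam * (wnorm P)\<^sup>2 \<Longrightarrow> \<exists>\<kappa>. P = (\<lambda>x. \<kappa> * Hf x)"
proof -
  obtain c where supp: "\<And>l. c l \<noteq> 0 \<Longrightarrow> 2*M \<le> l \<and> l \<le> 2*N"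
    and P: "P = (\<lambda>x. \<Sum>l=2*M..2*N. c l * complex_of_real (herm_h l x))"
    using PiH_coeffs[OF assms] by blast
  define u where "u k = c (2*k)" for k
  define v where "v k = c (2*k+1)" for k
  have su: "\<And>k. u k \<noteq> 0 \<Longrightarrow> M \<le> k \<and> k \<le> N" unfolding u_def using supp by fastforce
  have sv: "\<And>k. v k \<noteq> 0 \<Longrightarrow> M \<le> k \<and> k < N" unfolding v_def using supp by fastforce
  have W: "(wnorm P)\<^sup>2 = (\<Sum>k\<le>N. (cmod (u k))\<^sup>2) + (\<Sum>k\<le>N. (cmod (v k))\<^sup>2)"
    unfolding P u_def v_def by (rule repr(2)) (rule supp)
  have V: "varS P = Eform N u + Oform N v"
    unfolding P u_def v_def by (rule repr(3)) (rule supp)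
  have Eb: "Eform N u \<ge> lam * (\<Sum>k\<le>N. (cmod (u k))\<^sup>2)"
    by (rule gs_bound_eq(1)[OF wv_supp wv_alt wv_eig su])
  have Ob: "Oform N v \<ge> lam * (\<Sum>k\<le>N. (cmod (v k))\<^sup>2)"
    by (rule odd_bound_eq(1)[OF wv_supp wv_alt wv_eig sv MN])
  show "varS P \<ge> lam * (wnorm P)\<^sup>2" unfolding V W using Eb Ob by (simp add: distrib_left)
  assume eq: "varS P = lam * (wnorm P)\<^sup>2"
  then have Ee: "Eform N u = lam * (\<Sum>k\<le>N. (cmod (u k))\<^sup>2)"
    and Oe: "Oform N v = lam * (\<Sum>k\<le>N. (cmod (v k))\<^sup>2)"
    unfolding V W using Eb Ob by (simp_all add: distrib_left)
  obtain \<kappa> where uk: "\<forall>k. u k = \<kappa> * complex_of_real (wv k)"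
    using gs_bound_eq(2)[OF wv_supp wv_alt wv_eig su Ee] by blast
  have v0: "\<forall>k. v k = 0" by (rule odd_bound_eq(2)[OF wv_supp wv_alt wv_eig sv MN Oe])
  have "P = (\<lambda>x. \<Sum>k\<le>N. c (2*k) * complex_of_real (herm_h (2*k) x) + c (2*k+1) * complex_of_real (herm_h (2*k+1) x))"
    unfolding P by (rule repr(4)) (rule supp)
  also have "\<dots> = (\<lambda>x. \<kappa> * (\<Sum>k\<le>N. cH (2*k) * complex_of_real (herm_h (2*k) x) + cH (2*k+1) * complex_of_real (herm_h (2*k+1) x)))"
    using uk v0 unfolding u_def v_def by (simp add: cH_def sum_distrib_left mult.assoc)
  also have "\<dots> = (\<lambda>x. \<kappa> * Hf x)"
    unfolding Hf_repr cH_r4 by simp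
  finally show "\<exists>\<kappa>. P = (\<lambda>x. \<kappa> * Hf x)" by blast
qed

lemma kHf_PiH: "(\<lambda>x. \<kappa> * Hf x) \<in> PiH_from (2*M) (2*N)"
  unfolding PiH_from_def Hf_repr
  by (rule CollectI, rule exI[of _ "\<lambda>l. \<kappa> * cH l"]) (simp add: sum_distrib_left mult.assoc)

lemma kHf_facts:
  shows "varS (\<lambda>x. \<kappa> * Hf x) = lam * (wnorm (\<lambda>x. \<kappa> * Hf x))\<^sup>2"
    and "(wnorm (\<lambda>x. \<kappa> * Hf x))\<^sup>2 = (cmod \<kappa>)\<^sup>2 * (\<Sum>k\<le>N. (wv k)\<^sup>2)"
proof -
  define c where "c l = \<kappa> * cH l" for l
  have supp: "\<And>l. c l \<noteq> 0 \<Longrightarrow> 2*M \<le> l \<and> l \<le> 2*N" unfolding c_def using cH_supp by auto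
  have P: "(\<lambda>x. \<kappa> * Hf x) = (\<lambda>x. \<Sum>l=2*M..2*N. c l * complex_of_real (herm_h l x))"
    unfolding Hf_repr c_def by (simp add: sum_distrib_left mult.assoc)
  define u where "u k = c (2*k)" for k
  define v where "v k = c (2*k+1)" for k
  have u: "\<And>k. u k = complex_of_real (wv k) * \<kappa>" by (simp add: u_def c_def cH_def)
  have v: "\<And>k. v k = 0" by (simp add: v_def c_def cH_def)
  have W: "(wnorm (\<lambda>x. \<kappa> * Hf x))\<^sup>2 = (\<Sum>k\<le>N. (cmod (u k))\<^sup>2) + (\<Sum>k\<le>N. (cmod (v k))\<^sup>2)"
    unfolding P u_def v_def by (rule repr(2)) (rule supp)
  have V: "varS (\<lambda>x. \<kappa> * Hf x) = Eform N u + Oform N v"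
    unfolding P u_def v_def by (rule repr(3)) (rule supp)
  have wN: "wv (Suc N) = 0" using wv_supp[of "Suc N"] by simp
  have E: "Eform N u = lam * (\<Sum>k\<le>N. (cmod (u k))\<^sup>2)
      - (\<Sum>k\<le>N. sk k * tk k * wv k * wv (Suc k) * (cmod ((\<lambda>_. \<kappa>) k - (\<lambda>_. \<kappa>) (Suc k)))\<^sup>2)"
    by (rule gs_identity[OF u wv_eig wN])
  have O: "Oform N v = 0" by (simp add: Oform_def v)
  show "varS (\<lambda>x. \<kappa> * Hf x) = lam * (wnorm (\<lambda>x. \<kappa> * Hf x))\<^sup>2"
    unfolding V W E O by (simp add: v)
  show "(wnorm (\<lambda>x. \<kappa> * Hf x))\<^sup>2 = (cmod \<kappa>)\<^sup>2 * (\<Sum>k\<le>N. (wv k)\<^sup>2)"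
    unfolding W by (simp add: u v norm_mult power_mult_distrib sum_distrib_left mult.commute)
qed

lemma wv_sum_pos: "(\<Sum>k\<le>N. (wv k)\<^sup>2) > 0"
proof -
  have "wv M \<noteq> 0" using wv_supp[of M] MN by simp
  then have "(wv M)\<^sup>2 > 0" by simp
  moreover have "(wv M)\<^sup>2 \<le> (\<Sum>k\<le>N. (wv k)\<^sup>2)"
    by (rule member_le_sum) (use MN in auto)
  ultimately show ?thesis by (rule less_le_trans)
qed

end


lemma lag_p_assoc: "lag_p \<alpha> l x = lag_p \<alpha> 0 x * lag_assoc \<alpha> 0 l x"
  by (induction \<alpha> l x rule: lag_p.induct)
     (simp_all del: lag_p.simps(1) add: times_divide_eq_right algebra_simps)

lemma c0_nz: "lag_p (-1/2) 0 x \<noteq> 0"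
proof -
  have g: "Gamma (-1/2 + 1 :: real) > 0" by (rule Gamma_real_pos) simp
  have h: "Gamma (1/2 :: real) > 0" using g by simp
  have h2: "Gamma (1/2 :: real) \<noteq> 0" using h by linarith
  show ?thesis unfolding lag_p.simps(1) by (simp add: h2)
qed

lemma part2:
  fixes n m :: nat
  assumes "even n" "even m" "m \<le> n"
  shows "{P \<in> SH_from m n. \<forall>Q \<in> SH_from m n. varS P \<le> varS Q}
           = {P. \<exists>\<kappa>2 :: complex. P = (\<lambda>x. \<kappa>2 * Hcal_from m n x) \<and> wnorm P = 1}
       \<and> (\<exists>P \<in> SH_from m n. varS P = lam_mn m n) \<and> (\<forall>P \<in> SH_from m n. lam_mn m n \<le> varS P)"
proof -
  define M where "M = m div 2"
  define N where "N = n div 2"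
  have m: "m = 2 * M" and n: "n = 2 * N" using assms by (auto simp: M_def N_def)
  have MN: "M \<le> N" using assms by (simp add: M_def N_def div_le_mono)
  interpret zsetup M N by standard (rule MN)
  have nm: "(n - m) div 2 + 1 = Suc (N - M)" using m n by simp
  have lam_eq: "lam_mn m n = lam"
  proof -
    have "{x. lag_assoc (-1/2) M (Suc (N - M)) x = 0} = Zs M (Suc (N - M))"
      by (auto simp: Zs_def lag_fs')
    then show ?thesis unfolding lam_mn_def smallest_zero_def lam_def nm M_def[symmetric] by simp
  qed
  have H_eq: "Hcal_from m n = Hf"
    by (rule ext) (simp add: Hcal_from_def Hf_def lam_eq M_def[symmetric] N_def[symmetric])
  have S_eq: "SH_from m n = {P \<in> PiH_from (2*M) (2*N). wnorm P = 1}"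
    unfolding SH_from_def m n ..
  have wn_nonneg: "\<And>P. wnorm P \<ge> 0" by (simp add: wnorm_def)
  have wn1: "\<And>P. (wnorm P)\<^sup>2 = 1 \<Longrightarrow> wnorm P = 1"
  proof -
    fix P assume "(wnorm P)\<^sup>2 = 1"
    then show "wnorm P = 1" using wn_nonneg[of P] by (simp add: power2_eq_1_iff)
  qed
  have lowS: "\<forall>P \<in> SH_from m n. lam \<le> varS P"
    using lower_eq(1) unfolding S_eq by fastforce
  define K where "K = (\<Sum>k\<le>N. (wv k)\<^sup>2)"
  have Kpos: "K > 0" unfolding K_def by (rule wv_sum_pos)
  define \<kappa>0 where "\<kappa>0 = complex_of_real (1 / sqrt K)"
  define P0 where "P0 = (\<lambda>x. \<kappa>0 * Hf x)"
  have P0n: "wnorm P0 = 1"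
  proof (rule wn1)
    show "(wnorm P0)\<^sup>2 = 1" unfolding P0_def kHf_facts(2) K_def[symmetric] \<kappa>0_def
      using Kpos by (simp add: power_divide norm_divide)
  qed
  have P0S: "P0 \<in> SH_from m n" unfolding S_eq P0_def using kHf_PiH P0n by (simp add: P0_def)
  have P0v: "varS P0 = lam" unfolding P0_def kHf_facts(1) using P0n by (simp add: P0_def)
  have setq: "{P \<in> SH_from m n. \<forall>Q \<in> SH_from m n. varS P \<le> varS Q}
           = {P. \<exists>\<kappa>2 :: complex. P = (\<lambda>x. \<kappa>2 * Hf x) \<and> wnorm P = 1}"
  proof (intro equalityI subsetI)
    fix P assume "P \<in> {P \<in> SH_from m n. \<forall>Q \<in> SH_from m n. varS P \<le> varS Q}"
    then have PS: "P \<in> SH_from m n" and min: "\<forall>Q \<in> SH_from m n. varS P \<le> varS Q" by auto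
    have PP: "P \<in> PiH_from (2*M) (2*N)" and Pn: "wnorm P = 1" using PS unfolding S_eq by auto
    have "varS P \<le> lam" using min P0S P0v by fastforce
    moreover have "lam \<le> varS P" using lowS PS by blast
    ultimately have "varS P = lam * (wnorm P)\<^sup>2" using Pn by simp
    then obtain \<kappa> where "P = (\<lambda>x. \<kappa> * Hf x)" using lower_eq(2)[OF PP] by blast
    then show "P \<in> {P. \<exists>\<kappa>2 :: complex. P = (\<lambda>x. \<kappa>2 * Hf x) \<and> wnorm P = 1}" using Pn by blast
  next
    fix P assume "P \<in> {P. \<exists>\<kappa>2 :: complex. P = (\<lambda>x. \<kappa>2 * Hf x) \<and> wnorm P = 1}"
    then obtain \<kappa> where P: "P = (\<lambda>x. \<kappa> * Hf x)" and Pn: "wnorm P = 1" by blast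
    have PS: "P \<in> SH_from m n" unfolding S_eq P using kHf_PiH Pn P by simp
    have "varS P = lam" unfolding P kHf_facts(1) using Pn P by simp
    then show "P \<in> {P \<in> SH_from m n. \<forall>Q \<in> SH_from m n. varS P \<le> varS Q}"
      using PS lowS by auto
  qed
  show ?thesis unfolding lam_eq H_eq using setq P0S P0v lowS by blast
qed

theorem theorem5p2:
  fixes n m :: nat
  assumes "even n" "even m" "m \<le> n"
  shows "{P \<in> SH n. \<forall>Q \<in> SH n. varS P \<le> varS Q}
           = {P. \<exists>\<kappa>1 :: complex. P = (\<lambda>x. \<kappa>1 * Hcal n x) \<and> wnorm P = 1}
       \<and> (\<exists>P \<in> SH n. varS P = lam_n n) \<and> (\<forall>P \<in> SH n. lam_n n \<le> varS P)
       \<and> {P \<in> SH_from m n. \<forall>Q \<in> SH_from m n. varS P \<le> varS Q}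
           = {P. \<exists>\<kappa>2 :: complex. P = (\<lambda>x. \<kappa>2 * Hcal_from m n x) \<and> wnorm P = 1}
       \<and> (\<exists>P \<in> SH_from m n. varS P = lam_mn m n) \<and> (\<forall>P \<in> SH_from m n. lam_mn m n \<le> varS P)"
proof -
  have p0: "{P \<in> SH_from 0 n. \<forall>Q \<in> SH_from 0 n. varS P \<le> varS Q}
           = {P. \<exists>\<kappa>2 :: complex. P = (\<lambda>x. \<kappa>2 * Hcal_from 0 n x) \<and> wnorm P = 1}
       \<and> (\<exists>P \<in> SH_from 0 n. varS P = lam_mn 0 n) \<and> (\<forall>P \<in> SH_from 0 n. lam_mn 0 n \<le> varS P)"
    by (rule part2) (use assms in auto)
  define c0 where "c0 = lag_p (-1/2) 0 (0::real)"
  have c0nz: "c0 \<noteq> 0" unfolding c0_def by (rule c0_nz)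
  have c0x: "\<And>x. lag_p (-1/2) 0 x = c0" by (simp add: c0_def)
  have SH_eq: "SH n = SH_from 0 n"
    unfolding SH_def SH_from_def PiH_def PiH_from_def by (simp add: atMost_atLeast0)
  have lp: "\<And>l x. lag_p (-1/2) l x = c0 * lag_assoc (-1/2) 0 l x"
    by (subst lag_p_assoc) (simp only: c0x)
  have lam_eq: "lam_n n = lam_mn 0 n"
  proof -
    have "{x. lag_p (-1/2) (n div 2 + 1) x = 0} = {x. lag_assoc (-1/2) 0 (n div 2 + 1) x = 0}"
      unfolding lp using c0nz by simp
    then show ?thesis unfolding lam_n_def lam_mn_def smallest_zero_def by simp
  qed
  have H_eq: "\<And>x. Hcal n x = complex_of_real c0 * Hcal_from 0 n x"
    unfolding Hcal_def Hcal_from_def lam_eq lp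
    by (simp add: sum_distrib_left atMost_atLeast0 mult.assoc)
  have setq: "{P. \<exists>\<kappa>1 :: complex. P = (\<lambda>x. \<kappa>1 * Hcal n x) \<and> wnorm P = 1}
            = {P. \<exists>\<kappa>2 :: complex. P = (\<lambda>x. \<kappa>2 * Hcal_from 0 n x) \<and> wnorm P = 1}"
  proof (intro equalityI subsetI)
    fix P assume "P \<in> {P. \<exists>\<kappa>1 :: complex. P = (\<lambda>x. \<kappa>1 * Hcal n x) \<and> wnorm P = 1}"
    then obtain \<kappa> where "P = (\<lambda>x. \<kappa> * Hcal n x)" "wnorm P = 1" by blast
    then have "P = (\<lambda>x. (\<kappa> * complex_of_real c0) * Hcal_from 0 n x)" "wnorm P = 1"
      by (simp_all add: H_eq mult.assoc)
    then show "P \<in> {P. \<exists>\<kappa>2 :: complex. P = (\<lambda>x. \<kappa>2 * Hcal_from 0 n x) \<and> wnorm P = 1}" by blast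
  next
    fix P assume "P \<in> {P. \<exists>\<kappa>2 :: complex. P = (\<lambda>x. \<kappa>2 * Hcal_from 0 n x) \<and> wnorm P = 1}"
    then obtain \<kappa> where P: "P = (\<lambda>x. \<kappa> * Hcal_from 0 n x)" "wnorm P = 1" by blast
    have "P = (\<lambda>x. (\<kappa> / complex_of_real c0) * Hcal n x)"
      unfolding P H_eq using c0nz by (simp add: field_simps)
    then show "P \<in> {P. \<exists>\<kappa>1 :: complex. P = (\<lambda>x. \<kappa>1 * Hcal n x) \<and> wnorm P = 1}" using P by blast
  qed
  have part1: "{P \<in> SH n. \<forall>Q \<in> SH n. varS P \<le> varS Q}
           = {P. \<exists>\<kappa>1 :: complex. P = (\<lambda>x. \<kappa>1 * Hcal n x) \<and> wnorm P = 1}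
       \<and> (\<exists>P \<in> SH n. varS P = lam_n n) \<and> (\<forall>P \<in> SH n. lam_n n \<le> varS P)"
    unfolding SH_eq lam_eq setq by (rule p0)
  show ?thesis using part1 part2[OF assms] by blast
qed

end
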